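(* The map $(X,X')\mapsto\langle PX,X'\rangle$ is continuous on $\mathcal{V}\times\mathcal{V}$; more precisely, for all $X,X'\in\mathcal{V}$, $$|\langle PX,X'\rangle|\le\Big(\nu+\frac{2a^2}{\pi}\sqrt{\beta\gamma}+\frac{2\alpha a^2}{\pi^2}\Big)\|X\|_{\mathcal{V}}\|X'\|_{\mathcal{V}}.$$
   Context: Let $a>0$, $\nu>0$, $\alpha\ge0$, $\beta,\gamma>0$, $\mathbb{T}^2=(\mathbb{R}/2\pi\mathbb{Z})^2$, $\Omega=\mathbb{T}^2\times(0,a)$. $\mathcal{V}=\mathcal{V}_1\times\mathcal{V}_2$, where $\mathcal{V}_1$ is the closure in $H^1(\Omega)^2$ of smooth $(u,v)$ periodic in $x,y$, vanishing at $z=0$ and $z=a$, with $\int_0^a(\partial_xu+\partial_yv)\,dz=0$ for all $(x,y)$, and $\mathcal{V}_2$ is the closure in $H^1(\Omega)$ of smooth $\theta$ periodic in $x,y$ vanishing at $z=0,a$. For $X=(u,v,\theta)$, $X'=(u',v',\theta')\in\mathcal{V}$: $(X,X')_{\mathcal{V}}=\int_\Omega(\nabla u\cdot\nabla\bar u'+\nabla v\cdot\nabla\bar v'+\frac\beta\gamma\nabla\theta\cdot\nabla\bar\theta')$, $\|X\|_{\mathcal{V}}^2=(X,X)_{\mathcal{V}}$; $w=-\int_0^z(\partial_xu+\partial_yv)dz'$, $w'=-\int_0^z(\partial_xu'+\partial_yv')dz'$; $B(X,X')=-\int_\Omega\theta\bar w'+\int_\Omega w\bar\theta'$; $C(X,X')=-\int_\Omega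 v\bar u'+\int_\Omega u\bar v'$; and $\langle PX,X'\rangle=\nu(X,X')_{\mathcal{V}}+\beta B(X,X')+\alpha C(X,X')$. *)

theory Defs
  imports "HOL-Analysis.Analysis"
begin

type_synonym pt = "real \<times> real \<times> real"
type_synonym fld = "pt \<Rightarrow> complex"
type_synonym grd = "nat \<Rightarrow> pt \<Rightarrow> complex"

text \<open>Fundamental cell of Omega = T^2 x (0,a); functions are 2pi-periodic in x,y.\<close>
definition cell :: "real \<Rightarrow> pt set" where
  "cell a = {0<..<2*pi} \<times> {0<..<2*pi} \<times> {0<..<a}"

definition unitv :: "nat \<Rightarrow> pt" where
  "unitv i = (if i = 0 then (1,0,0) else if i = 1 then (0,1,0) else (0,0,1))"

definition pd :: "nat \<Rightarrow> fld \<Rightarrow> fld" where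
  "pd i f = (\<lambda>p. frechet_derivative f (at p) (unitv i))"

fun Diter :: "pt list \<Rightarrow> fld \<Rightarrow> fld" where
  "Diter [] f = f"
| "Diter (e # es) f = (\<lambda>p. frechet_derivative (Diter es f) (at p) e)"

definition smooth3 :: "fld \<Rightarrow> bool" where
  "smooth3 f \<longleftrightarrow> (\<forall>es p. Diter es f differentiable (at p))"

definition periodic_xy :: "fld \<Rightarrow> bool" where
  "periodic_xy f \<longleftrightarrow> (\<forall>x y z. f (x + 2*pi, y, z) = f (x, y, z) \<and> f (x, y + 2*pi, z) = f (x, y, z))"

definition vanish_bdry :: "real \<Rightarrow> fld \<Rightarrow> bool" where
  "vanish_bdry a f \<longleftrightarrow> (\<forall>x y. f (x, y, 0) = 0 \<and> f (x, y, a) = 0)"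

definition L2 :: "real \<Rightarrow> fld \<Rightarrow> bool" where
  "L2 a f \<longleftrightarrow> f \<in> borel_measurable lborel \<and> set_integrable lborel (cell a) (\<lambda>p. (cmod (f p))^2)"

definition dist2 :: "real \<Rightarrow> fld \<Rightarrow> fld \<Rightarrow> real" where
  "dist2 a f g = (LINT p:cell a|lborel. (cmod (f p - g p))^2)"

definition adm1 :: "real \<Rightarrow> fld \<Rightarrow> fld \<Rightarrow> bool" where
  "adm1 a u v \<longleftrightarrow> smooth3 u \<and> smooth3 v \<and> periodic_xy u \<and> periodic_xy v
     \<and> vanish_bdry a u \<and> vanish_bdry a v
     \<and> (\<forall>x y. (LINT z:{0..a}|lborel. pd 0 u (x, y, z) + pd 1 v (x, y, z)) = 0)"

definition adm2 :: "real \<Rightarrow> fld \<Rightarrow> bool" where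
  "adm2 a \<theta> \<longleftrightarrow> smooth3 \<theta> \<and> periodic_xy \<theta> \<and> vanish_bdry a \<theta>"

text \<open>An element of H^1(Omega) is a pair (f, Df) of an L^2 function and its (weak) gradient
  Df 0, Df 1, Df 2.  (u,v,Du,Dv) lies in V1, the H^1(Omega)^2-closure of adm1, iff it is the
  H^1-limit of a sequence from adm1.\<close>
definition inV1 :: "real \<Rightarrow> fld \<Rightarrow> fld \<Rightarrow> grd \<Rightarrow> grd \<Rightarrow> bool" where
  "inV1 a u v Du Dv \<longleftrightarrow> L2 a u \<and> L2 a v \<and> (\<forall>i<3. L2 a (Du i) \<and> L2 a (Dv i)) \<and>
     (\<exists>U V. (\<forall>n. adm1 a (U n) (V n)) \<and>
        (\<lambda>n. dist2 a (U n) u) \<longlonglongrightarrow> 0 \<and> (\<lambda>n. dist2 a (V n) v) \<longlonglongrightarrow> 0 \<and>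
        (\<forall>i<3. (\<lambda>n. dist2 a (pd i (U n)) (Du i)) \<longlonglongrightarrow> 0 \<and>
               (\<lambda>n. dist2 a (pd i (V n)) (Dv i)) \<longlonglongrightarrow> 0))"

definition inV2 :: "real \<Rightarrow> fld \<Rightarrow> grd \<Rightarrow> bool" where
  "inV2 a \<theta> D\<theta> \<longleftrightarrow> L2 a \<theta> \<and> (\<forall>i<3. L2 a (D\<theta> i)) \<and>
     (\<exists>T. (\<forall>n. adm2 a (T n)) \<and> (\<lambda>n. dist2 a (T n) \<theta>) \<longlonglongrightarrow> 0 \<and>
        (\<forall>i<3. (\<lambda>n. dist2 a (pd i (T n)) (D\<theta> i)) \<longlonglongrightarrow> 0))"

definition wfun :: "grd \<Rightarrow> grd \<Rightarrow> fld" where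
  "wfun Du Dv = (\<lambda>(x, y, z). - (LINT t:{0..z}|lborel. Du 0 (x, y, t) + Dv 1 (x, y, t)))"

definition innerV :: "real \<Rightarrow> real \<Rightarrow> real \<Rightarrow> grd \<Rightarrow> grd \<Rightarrow> grd \<Rightarrow> grd \<Rightarrow> grd \<Rightarrow> grd \<Rightarrow> complex" where
  "innerV a \<beta> \<gamma> Du Dv D\<theta> Du' Dv' D\<theta>' =
     (LINT p:cell a|lborel. (\<Sum>i<3. Du i p * cnj (Du' i p) + Dv i p * cnj (Dv' i p)
                                  + of_real (\<beta>/\<gamma>) * D\<theta> i p * cnj (D\<theta>' i p)))"

definition normV :: "real \<Rightarrow> real \<Rightarrow> real \<Rightarrow> grd \<Rightarrow> grd \<Rightarrow> grd \<Rightarrow> real" where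
  "normV a \<beta> \<gamma> Du Dv D\<theta> = sqrt (Re (innerV a \<beta> \<gamma> Du Dv D\<theta> Du Dv D\<theta>))"

definition Bform :: "real \<Rightarrow> fld \<Rightarrow> grd \<Rightarrow> grd \<Rightarrow> fld \<Rightarrow> grd \<Rightarrow> grd \<Rightarrow> complex" where
  "Bform a \<theta> Du Dv \<theta>' Du' Dv' =
     - (LINT p:cell a|lborel. \<theta> p * cnj (wfun Du' Dv' p))
     + (LINT p:cell a|lborel. wfun Du Dv p * cnj (\<theta>' p))"

definition Cform :: "real \<Rightarrow> fld \<Rightarrow> fld \<Rightarrow> fld \<Rightarrow> fld \<Rightarrow> complex" where
  "Cform a u v u' v' =
     - (LINT p:cell a|lborel. v p * cnj (u' p)) + (LINT p:cell a|lborel. u p * cnj (v' p))"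

text \<open>The sesquilinear form <P X, X'> for X = (u,v,theta) with gradients Du, Dv, Dtheta.\<close>
definition Pform :: "real \<Rightarrow> real \<Rightarrow> real \<Rightarrow> real \<Rightarrow> real \<Rightarrow>
    fld \<Rightarrow> fld \<Rightarrow> fld \<Rightarrow> grd \<Rightarrow> grd \<Rightarrow> grd \<Rightarrow>
    fld \<Rightarrow> fld \<Rightarrow> fld \<Rightarrow> grd \<Rightarrow> grd \<Rightarrow> grd \<Rightarrow> complex" where
  "Pform a \<nu> \<alpha> \<beta> \<gamma> u v \<theta> Du Dv D\<theta> u' v' \<theta>' Du' Dv' D\<theta>' =
     of_real \<nu> * innerV a \<beta> \<gamma> Du Dv D\<theta> Du' Dv' D\<theta>'
     + of_real \<beta> * Bform a \<theta> Du Dv \<theta>' Du' Dv'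
     + of_real \<alpha> * Cform a u v u' v'"

end

theory Submission
  imports Defs
begin


lemma cs_nn:
  fixes f g :: "'a \<Rightarrow> real"
  assumes fm: "f \<in> borel_measurable M" and gm: "g \<in> borel_measurable M"
    and f0: "\<And>x. f x \<ge> 0" and g0: "\<And>x. g x \<ge> 0"
    and fA: "(\<integral>\<^sup>+x. ennreal ((f x)^2) \<partial>M) \<le> ennreal A"
    and gB: "(\<integral>\<^sup>+x. ennreal ((g x)^2) \<partial>M) \<le> ennreal B"
    and A0: "A \<ge> 0" and B0: "B \<ge> 0"
  shows "(\<integral>\<^sup>+x. ennreal (f x * g x) \<partial>M) \<le> ennreal (sqrt A * sqrt B)"
proof -
  have key: "(\<integral>\<^sup>+x. ennreal (f x * g x) \<partial>M) \<le> ennreal (s/2 * A + 1/(2 * s) * B)" if s: "s > 0" for s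
  proof -
    have pw: "f x * g x \<le> s/2 * (f x)^2 + 1/(2 * s) * (g x)^2" for x
    proof -
      have e: "s/2 * (f x)^2 + 1/(2 * s) * (g x)^2 - f x * g x = (s * f x - g x)^2 / (2 * s)"
        using s by (simp add: field_simps power2_eq_square)
      have "(s * f x - g x)^2 / (2 * s) \<ge> 0" using s by simp
      thus ?thesis using e by linarith
    qed
    have "(\<integral>\<^sup>+x. ennreal (f x * g x) \<partial>M) \<le> (\<integral>\<^sup>+x. ennreal (s/2) * ennreal ((f x)^2) + ennreal (1/(2 * s)) * ennreal ((g x)^2) \<partial>M)"
      apply (rule nn_integral_mono)
      using pw s by (simp add: ennreal_mult[symmetric] ennreal_plus[symmetric] del: ennreal_plus)
    also have "\<dots> = ennreal (s/2) * (\<integral>\<^sup>+x. ennreal ((f x)^2) \<partial>M) + ennreal (1/(2 * s)) * (\<integral>\<^sup>+x. ennreal ((g x)^2) \<partial>M)"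
      using fm gm by (simp add: nn_integral_add nn_integral_cmult)
    also have "\<dots> \<le> ennreal (s/2) * ennreal A + ennreal (1/(2 * s)) * ennreal B"
      by (intro add_mono mult_left_mono fA gB) auto
    also have "\<dots> = ennreal (s/2 * A + 1/(2 * s) * B)"
      using s A0 B0 by (simp add: ennreal_mult[symmetric] ennreal_plus[symmetric] del: ennreal_plus)
    finally show ?thesis .
  qed
  show ?thesis
  proof (cases "A = 0 \<or> B = 0")
    case True
    have "(\<integral>\<^sup>+x. ennreal (f x * g x) \<partial>M) = 0"
    proof (cases "A = 0")
      case True
      hence "(\<integral>\<^sup>+x. ennreal ((f x)^2) \<partial>M) = 0" using fA by simp
      hence "AE x in M. ennreal ((f x)^2) = 0" using fm by (subst (asm) nn_integral_0_iff_AE) auto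
      hence "AE x in M. ennreal (f x * g x) = 0" by eventually_elim (auto)
      thus ?thesis by (subst nn_integral_cong_AE[where v="\<lambda>_. 0"]) auto
    next
      case False
      hence "B = 0" using \<open>A = 0 \<or> B = 0\<close> by simp
      hence "(\<integral>\<^sup>+x. ennreal ((g x)^2) \<partial>M) = 0" using gB by simp
      hence "AE x in M. ennreal ((g x)^2) = 0" using gm by (subst (asm) nn_integral_0_iff_AE) auto
      hence "AE x in M. ennreal (f x * g x) = 0" by eventually_elim (auto)
      thus ?thesis by (subst nn_integral_cong_AE[where v="\<lambda>_. 0"]) auto
    qed
    thus ?thesis by simp
  next
    case False
    hence Ap: "A > 0" and Bp: "B > 0" using A0 B0 by auto
    define s where "s = sqrt B / sqrt A"
    have sp: "s > 0" using Ap Bp by (simp add: s_def)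
    have "s/2 * A + 1/(2 * s) * B = sqrt A * sqrt B"
      using Ap Bp unfolding s_def
      by (simp add: field_simps)
    with key[OF sp] show ?thesis by simp
  qed
qed


lemma cs_gen:
  fixes F :: "'a \<Rightarrow> complex" and f g :: "'a \<Rightarrow> real"
  assumes fm: "f \<in> borel_measurable M" and gm: "g \<in> borel_measurable M"
    and f0: "\<And>x. f x \<ge> 0" and g0: "\<And>x. g x \<ge> 0"
    and Fb: "AE x in M. cmod (F x) \<le> f x * g x"
    and fA: "(\<integral>\<^sup>+x. ennreal ((f x)^2) \<partial>M) \<le> ennreal A"
    and gB: "(\<integral>\<^sup>+x. ennreal ((g x)^2) \<partial>M) \<le> ennreal B"
    and A0: "A \<ge> 0" and B0: "B \<ge> 0"
  shows "cmod (integral\<^sup>L M F) \<le> sqrt A * sqrt B"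
proof (cases "integrable M F")
  case True
  have "ennreal (cmod (integral\<^sup>L M F)) \<le> (\<integral>\<^sup>+x. ennreal (cmod (F x)) \<partial>M)"
    using integral_norm_bound_ennreal[OF True] by simp
  also have "\<dots> \<le> (\<integral>\<^sup>+x. ennreal (f x * g x) \<partial>M)"
    by (rule nn_integral_mono_AE) (use Fb in \<open>auto intro: ennreal_leI\<close>)
  also have "\<dots> \<le> ennreal (sqrt A * sqrt B)"
    by (rule cs_nn[OF fm gm f0 g0 fA gB A0 B0])
  finally show ?thesis using A0 B0 by (simp add: ennreal_le_iff)
next
  case False
  thus ?thesis using A0 B0 by (simp add: not_integrable_integral_eq)
qed

lemma cs_set:
  fixes F :: "'a \<Rightarrow> complex" and f g :: "'a \<Rightarrow> real"
  assumes S: "S \<in> sets M" and fm: "f \<in> borel_measurable M" and gm: "g \<in> borel_measurable M"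
    and f0: "\<And>x. f x \<ge> 0" and g0: "\<And>x. g x \<ge> 0"
    and Fb: "AE x in M. x \<in> S \<longrightarrow> cmod (F x) \<le> f x * g x"
    and fA: "(\<integral>\<^sup>+x. ennreal ((f x)^2) * indicator S x \<partial>M) \<le> ennreal A"
    and gB: "(\<integral>\<^sup>+x. ennreal ((g x)^2) * indicator S x \<partial>M) \<le> ennreal B"
    and A0: "A \<ge> 0" and B0: "B \<ge> 0"
  shows "cmod (LINT x:S|M. F x) \<le> sqrt A * sqrt B"
  unfolding set_lebesgue_integral_def
proof (rule cs_gen[where f="\<lambda>x. indicator S x * f x" and g="\<lambda>x. indicator S x * g x"])
  show "(\<lambda>x. indicator S x * f x) \<in> borel_measurable M" using S fm by measurable
  show "(\<lambda>x. indicator S x * g x) \<in> borel_measurable M" using S gm by measurable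
  show "\<And>x. 0 \<le> indicator S x * f x" using f0 by (simp split: split_indicator)
  show "\<And>x. 0 \<le> indicator S x * g x" using g0 by (simp split: split_indicator)
  show "AE x in M. cmod (indicator S x *\<^sub>R F x) \<le> indicator S x * f x * (indicator S x * g x)"
    using Fb by eventually_elim (simp split: split_indicator)
  have "(\<integral>\<^sup>+x. ennreal ((indicator S x * f x)^2) \<partial>M) = (\<integral>\<^sup>+x. ennreal ((f x)^2) * indicator S x \<partial>M)"
    by (intro nn_integral_cong) (simp split: split_indicator)
  thus "(\<integral>\<^sup>+x. ennreal ((indicator S x * f x)^2) \<partial>M) \<le> ennreal A" using fA by simp
  have "(\<integral>\<^sup>+x. ennreal ((indicator S x * g x)^2) \<partial>M) = (\<integral>\<^sup>+x. ennreal ((g x)^2) * indicator S x \<partial>M)"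
    by (intro nn_integral_cong) (simp split: split_indicator)
  thus "(\<integral>\<^sup>+x. ennreal ((indicator S x * g x)^2) \<partial>M) \<le> ennreal B" using gB by simp
qed (use A0 B0 in auto)


definition Qn :: "real \<Rightarrow> fld \<Rightarrow> ennreal" where
  "Qn a f = (\<integral>\<^sup>+p. ennreal ((cmod (f p))^2) * indicator (cell a) p \<partial>lborel)"

definition sq2 :: "real \<Rightarrow> fld \<Rightarrow> real" where
  "sq2 a f = (LINT p:cell a|lborel. (cmod (f p))^2)"

lemma cell_open: "open (cell a)"
  unfolding cell_def by (intro open_Times open_greaterThanLessThan)

lemma cell_sets[measurable]: "cell a \<in> sets lborel"
  using cell_open by simp

lemma L2_iff: "L2 a f \<longleftrightarrow> f \<in> borel_measurable lborel \<and> Qn a f < \<infinity>"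
proof -
  have e: "(\<integral>\<^sup>+p. ennreal (norm (indicator (cell a) p *\<^sub>R (cmod (f p))^2)) \<partial>lborel) = Qn a f"
    unfolding Qn_def by (intro nn_integral_cong) (simp split: split_indicator)
  show ?thesis
    unfolding L2_def set_integrable_def
    apply (subst integrable_iff_bounded)
    apply (subst e)
    apply (auto)
    done
qed

lemma L2_meas: "L2 a f \<Longrightarrow> f \<in> borel_measurable lborel"
  by (simp add: L2_def)

lemma sq2_nonneg: "sq2 a f \<ge> 0"
  unfolding sq2_def set_lebesgue_integral_def by (intro integral_nonneg_AE) (simp split: split_indicator)

lemma Qn_sq2: assumes "L2 a f" shows "Qn a f = ennreal (sq2 a f)"
proof -
  have i: "integrable lborel (\<lambda>p. indicator (cell a) p *\<^sub>R (cmod (f p))^2)"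
    using assms unfolding L2_def set_integrable_def by simp
  have "Qn a f = (\<integral>\<^sup>+p. ennreal (indicator (cell a) p *\<^sub>R (cmod (f p))^2) \<partial>lborel)"
    unfolding Qn_def by (intro nn_integral_cong) (simp split: split_indicator)
  also have "\<dots> = ennreal (sq2 a f)"
    unfolding sq2_def set_lebesgue_integral_def
    by (rule nn_integral_eq_integral[OF i]) (simp split: split_indicator)
  finally show ?thesis .
qed

lemma L2_diff: assumes "L2 a f" "L2 a g" shows "L2 a (\<lambda>p. f p - g p)"
proof -
  have fm: "f \<in> borel_measurable lborel" and gm: "g \<in> borel_measurable lborel"
    using assms L2_meas by auto
  have "Qn a (\<lambda>p. f p - g p) \<le> (\<integral>\<^sup>+p. ennreal 2 * (ennreal ((cmod (f p))^2) * indicator (cell a) p)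
          + ennreal 2 * (ennreal ((cmod (g p))^2) * indicator (cell a) p) \<partial>lborel)"
    unfolding Qn_def
  proof (intro nn_integral_mono)
    fix p
    have "(cmod (f p - g p))^2 \<le> (cmod (f p) + cmod (g p))^2"
      by (intro power_mono norm_triangle_ineq4) auto
    also have "\<dots> \<le> 2 * (cmod (f p))^2 + 2 * (cmod (g p))^2"
      using sum_squares_ge_zero[of "cmod (f p) - cmod (g p)" 0]
      by (simp add: power2_eq_square algebra_simps)
    finally have "(cmod (f p - g p))^2 \<le> 2 * (cmod (f p))^2 + 2 * (cmod (g p))^2" .
    hence i: "ennreal ((cmod (f p - g p))^2) \<le> ennreal (2 * (cmod (f p))^2 + 2 * (cmod (g p))^2)"
      by (rule ennreal_leI)
    have e: "ennreal (2 * (cmod (f p))^2 + 2 * (cmod (g p))^2) = ennreal 2 * ennreal ((cmod (f p))^2) + ennreal 2 * ennreal ((cmod (g p))^2)"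
      by (simp add: ennreal_mult)
    show "ennreal ((cmod (f p - g p))^2) * indicator (cell a) p \<le> ennreal 2 * (ennreal ((cmod (f p))^2) * indicator (cell a) p)
          + ennreal 2 * (ennreal ((cmod (g p))^2) * indicator (cell a) p)"
      using i unfolding e by (simp split: split_indicator)
  qed
  also have "\<dots> = ennreal 2 * Qn a f + ennreal 2 * Qn a g"
    unfolding Qn_def using fm gm by (simp add: nn_integral_add nn_integral_cmult)
  also have "\<dots> < \<infinity>" using assms by (simp add: L2_iff ennreal_mult_less_top)
  finally show ?thesis using fm gm by (simp add: L2_iff)
qed

lemma dist2_sq2: "dist2 a f g = sq2 a (\<lambda>p. f p - g p)"
  unfolding dist2_def sq2_def ..

lemma dist2_sym: "dist2 a f g = dist2 a g f"
  unfolding dist2_def by (simp add: norm_minus_commute)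

lemma tri: assumes "L2 a f" "L2 a g"
  shows "sqrt (sq2 a f) \<le> sqrt (sq2 a g) + sqrt (dist2 a f g)"
proof -
  let ?h = "\<lambda>p. f p - g p"
  have hL: "L2 a ?h" by (rule L2_diff[OF assms])
  have gm: "g \<in> borel_measurable lborel" and hm: "?h \<in> borel_measurable lborel"
    using assms hL L2_meas by auto
  have "Qn a f \<le> (\<integral>\<^sup>+p. ennreal ((cmod (g p))^2) * indicator (cell a) p
       + ennreal 2 * ennreal (indicator (cell a) p * cmod (g p) * (indicator (cell a) p * cmod (?h p)))
       + ennreal ((cmod (?h p))^2) * indicator (cell a) p \<partial>lborel)"
    unfolding Qn_def
  proof (intro nn_integral_mono)
    fix p
    have "cmod (f p) \<le> cmod (g p) + cmod (?h p)" using norm_triangle_ineq[of "g p" "?h p"] by simp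
    hence "(cmod (f p))^2 \<le> (cmod (g p) + cmod (?h p))^2" by (intro power_mono) auto
    hence i: "ennreal ((cmod (f p))^2) \<le> ennreal ((cmod (g p))^2 + 2 * (cmod (g p) * cmod (?h p)) + (cmod (?h p))^2)"
      by (intro ennreal_leI) (simp add: power2_sum)
    have e: "ennreal ((cmod (g p))^2 + 2 * (cmod (g p) * cmod (?h p)) + (cmod (?h p))^2)
       = ennreal ((cmod (g p))^2) + ennreal 2 * ennreal (cmod (g p) * cmod (?h p)) + ennreal ((cmod (?h p))^2)"
      by (simp add: ennreal_mult)
    show "ennreal ((cmod (f p))^2) * indicator (cell a) p \<le> ennreal ((cmod (g p))^2) * indicator (cell a) p
       + ennreal 2 * ennreal (indicator (cell a) p * cmod (g p) * (indicator (cell a) p * cmod (?h p)))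
       + ennreal ((cmod (?h p))^2) * indicator (cell a) p"
      using i unfolding e by (simp split: split_indicator)
  qed
  also have "\<dots> = Qn a g + ennreal 2 * (\<integral>\<^sup>+p. ennreal (indicator (cell a) p * cmod (g p) * (indicator (cell a) p * cmod (?h p))) \<partial>lborel) + Qn a ?h"
    unfolding Qn_def using gm hm by (simp add: nn_integral_add nn_integral_cmult)
  also have "\<dots> \<le> ennreal (sq2 a g) + ennreal 2 * ennreal (sqrt (sq2 a g) * sqrt (sq2 a ?h)) + ennreal (sq2 a ?h)"
  proof -
    have "(\<integral>\<^sup>+p. ennreal (indicator (cell a) p * cmod (g p) * (indicator (cell a) p * cmod (?h p))) \<partial>lborel)
      \<le> ennreal (sqrt (sq2 a g) * sqrt (sq2 a ?h))"
    proof (rule cs_nn)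
      have "(\<integral>\<^sup>+x. ennreal ((indicator (cell a) x * cmod (g x))^2) \<partial>lborel) = Qn a g"
        unfolding Qn_def by (intro nn_integral_cong) (simp split: split_indicator)
      thus "(\<integral>\<^sup>+x. ennreal ((indicator (cell a) x * cmod (g x))^2) \<partial>lborel) \<le> ennreal (sq2 a g)"
        using Qn_sq2[OF assms(2)] by simp
      have "(\<integral>\<^sup>+x. ennreal ((indicator (cell a) x * cmod (?h x))^2) \<partial>lborel) = Qn a ?h"
        unfolding Qn_def by (intro nn_integral_cong) (simp split: split_indicator)
      thus "(\<integral>\<^sup>+x. ennreal ((indicator (cell a) x * cmod (?h x))^2) \<partial>lborel) \<le> ennreal (sq2 a ?h)"
        using Qn_sq2[OF hL] by simp
    qed (use gm hm sq2_nonneg in auto)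
    thus ?thesis using Qn_sq2[OF assms(2)] Qn_sq2[OF hL] by (intro add_mono mult_left_mono) auto
  qed
  also have "\<dots> = ennreal (sq2 a g + 2 * (sqrt (sq2 a g) * sqrt (sq2 a ?h)) + sq2 a ?h)"
    using sq2_nonneg[of a g] sq2_nonneg[of a ?h]
    by (simp add: ennreal_mult)
  also have "sq2 a g + 2 * (sqrt (sq2 a g) * sqrt (sq2 a ?h)) + sq2 a ?h = (sqrt (sq2 a g) + sqrt (sq2 a ?h))^2"
    using sq2_nonneg[of a g] sq2_nonneg[of a ?h] by (simp add: power2_sum)
  finally have "ennreal (sq2 a f) \<le> ennreal ((sqrt (sq2 a g) + sqrt (sq2 a ?h))^2)"
    using Qn_sq2[OF assms(1)] by simp
  hence "sq2 a f \<le> (sqrt (sq2 a g) + sqrt (sq2 a ?h))^2" by (simp add: ennreal_le_iff)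
  hence "sqrt (sq2 a f) \<le> sqrt ((sqrt (sq2 a g) + sqrt (sq2 a ?h))^2)" by (rule real_sqrt_le_mono)
  thus ?thesis using sq2_nonneg[of a g] sq2_nonneg[of a ?h] by (simp add: dist2_sq2)
qed

lemma lim_le:
  assumes Lf: "L2 a f" and Lg: "L2 a g" and LF: "\<And>n. L2 a (F n)" and LG: "\<And>n. L2 a (G n)"
    and le: "\<And>n. sq2 a (F n) \<le> K * sq2 a (G n)" and K: "K \<ge> 0"
    and cF: "(\<lambda>n. dist2 a (F n) f) \<longlonglongrightarrow> 0" and cG: "(\<lambda>n. dist2 a (G n) g) \<longlonglongrightarrow> 0"
  shows "sq2 a f \<le> K * sq2 a g"
proof -
  have conv: "(\<lambda>n. sq2 a (H n)) \<longlonglongrightarrow> sq2 a h" if Lh: "L2 a h" and LH: "\<And>n. L2 a (H n)"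
    and c: "(\<lambda>n. dist2 a (H n) h) \<longlonglongrightarrow> 0" for H h
  proof -
    have cs: "(\<lambda>n. sqrt (dist2 a (H n) h)) \<longlonglongrightarrow> 0"
      using tendsto_real_sqrt[OF c] by simp
    have "(\<lambda>n. sqrt (sq2 a (H n)) - sqrt (sq2 a h)) \<longlonglongrightarrow> 0"
    proof (rule tendsto_sandwich[where f="\<lambda>n. - sqrt (dist2 a (H n) h)" and h="\<lambda>n. sqrt (dist2 a (H n) h)"])
      show "\<forall>\<^sub>F n in sequentially. - sqrt (dist2 a (H n) h) \<le> sqrt (sq2 a (H n)) - sqrt (sq2 a h)"
      proof (intro always_eventually allI)
        fix n
        show "- sqrt (dist2 a (H n) h) \<le> sqrt (sq2 a (H n)) - sqrt (sq2 a h)"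
          using tri[OF Lh LH[of n]] unfolding dist2_sym[of a h "H n"] by linarith
      qed
      show "\<forall>\<^sub>F n in sequentially. sqrt (sq2 a (H n)) - sqrt (sq2 a h) \<le> sqrt (dist2 a (H n) h)"
        using tri[OF LH Lh] by (simp add: algebra_simps)
      show "(\<lambda>n. - sqrt (dist2 a (H n) h)) \<longlonglongrightarrow> 0" using tendsto_minus[OF cs] by simp
    qed (rule cs)
    hence "(\<lambda>n. sqrt (sq2 a (H n))) \<longlonglongrightarrow> sqrt (sq2 a h)"
      using Lim_null[symmetric] by (simp add: LIM_zero_iff)
    hence "(\<lambda>n. (sqrt (sq2 a (H n)))^2) \<longlonglongrightarrow> (sqrt (sq2 a h))^2" by (rule tendsto_power)
    thus ?thesis using sq2_nonneg by simp
  qed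
  have "(\<lambda>n. sq2 a (F n)) \<longlonglongrightarrow> sq2 a f" by (rule conv[OF Lf LF cF])
  moreover have "(\<lambda>n. K * sq2 a (G n)) \<longlonglongrightarrow> K * sq2 a g" by (intro tendsto_mult_left conv[OF Lg LG cG])
  ultimately show ?thesis using le by (intro LIMSEQ_le) auto
qed


lemma int_lin1: assumes "b \<ge> 0"
  shows "(\<integral>\<^sup>+z. ennreal z * indicator {0..b} z \<partial>lborel) = ennreal (b^2/2)"
proof -
  have h: "((\<lambda>z::real. z) has_integral (b^2/2 - 0^2/2)) {0..b}"
  proof (rule fundamental_theorem_of_calculus)
    show "0 \<le> b" by fact
    fix x assume "x \<in> {0..b}"
    have "((\<lambda>z::real. z^2/2) has_real_derivative x) (at x within {0..b})"
      by (auto intro!: derivative_eq_intros)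
    thus "((\<lambda>z::real. z^2/2) has_vector_derivative x) (at x within {0..b})"
      by (simp add: has_real_derivative_iff_has_vector_derivative)
  qed
  have "(\<integral>\<^sup>+z. ennreal (indicator {0..b} z * z) \<partial>lborel) = ennreal (b^2/2)"
    using nn_integral_has_integral_lebesgue[OF _ h] by simp
  moreover have "(\<integral>\<^sup>+z. ennreal z * indicator {0..b} z \<partial>lborel) = (\<integral>\<^sup>+z. ennreal (indicator {0..b} z * z) \<partial>lborel)"
    by (intro nn_integral_cong) (simp split: split_indicator)
  ultimately show ?thesis by simp
qed

lemma int_lin2: assumes "l \<le> a"
  shows "(\<integral>\<^sup>+z. ennreal (a - z) * indicator {l..a} z \<partial>lborel) = ennreal ((a - l)^2/2)"
proof -
  have h0: "((\<lambda>z::real. a - z) has_integral ((\<lambda>z. - ((a - z)^2) / 2) a - (\<lambda>z. - ((a - z)^2) / 2) l)) {l..a}"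
  proof (rule fundamental_theorem_of_calculus)
    show "l \<le> a" by fact
    fix x assume "x \<in> {l..a}"
    have "((\<lambda>z::real. - ((a - z)^2) / 2) has_real_derivative (a - x)) (at x within {l..a})"
      by (rule derivative_eq_intros refl | simp add: field_simps)+
    thus "((\<lambda>z::real. - ((a - z)^2) / 2) has_vector_derivative (a - x)) (at x within {l..a})"
      by (simp add: has_real_derivative_iff_has_vector_derivative)
  qed
  have h: "((\<lambda>z::real. a - z) has_integral ((a - l)^2/2)) {l..a}" using h0 by simp
  have "(\<integral>\<^sup>+z. ennreal (indicator {l..a} z * (a - z)) \<partial>lborel) = ennreal ((a - l)^2/2)"
    using nn_integral_has_integral_lebesgue[OF _ h] by simp
  moreover have "(\<integral>\<^sup>+z. ennreal (a - z) * indicator {l..a} z \<partial>lborel) = (\<integral>\<^sup>+z. ennreal (indicator {l..a} z * (a - z)) \<partial>lborel)"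
    by (intro nn_integral_cong) (simp split: split_indicator)
  ultimately show ?thesis by simp
qed

lemma p1:
  fixes g g' :: "real \<Rightarrow> complex" and a :: real
  assumes a: "a > 0" and d: "\<And>z. (g has_vector_derivative g' z) (at z)" and c: "continuous_on UNIV g'"
    and g0: "g 0 = 0" and ga: "g a = 0"
  shows "(\<integral>\<^sup>+z. ennreal ((cmod (g z))^2) * indicator {0<..<a} z \<partial>lborel)
     \<le> ennreal (a^2/8) * (\<integral>\<^sup>+z. ennreal ((cmod (g' z))^2) * indicator {0<..<a} z \<partial>lborel)"
proof -
  define G where "G z = (cmod (g' z))^2" for z
  have cG: "continuous_on UNIV G" unfolding G_def using c by (intro continuous_intros)
  have Gm: "G \<in> borel_measurable lborel" using borel_measurable_continuous_onI[OF cG] by simp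
  have g'm: "(\<lambda>z. cmod (g' z)) \<in> borel_measurable lborel"
    using borel_measurable_continuous_onI[of "\<lambda>z. cmod (g' z)"] c by (simp add: continuous_on_norm)
  have G0: "G z \<ge> 0" for z by (simp add: G_def)
  have nnI: "(\<integral>\<^sup>+z. ennreal (G z) * indicator {l..u} z \<partial>lborel) = ennreal (LINT z:{l..u}|lborel. G z)" for l u
  proof -
    have i: "set_integrable lborel {l..u} G" by (rule borel_integrable_atLeastAtMost') (use cG continuous_on_subset in blast)
    have "(\<integral>\<^sup>+z. ennreal (G z) * indicator {l..u} z \<partial>lborel) = (\<integral>\<^sup>+z. ennreal (indicator {l..u} z *\<^sub>R G z) \<partial>lborel)"
      by (intro nn_integral_cong) (simp split: split_indicator)
    also have "\<dots> = ennreal (LINT z:{l..u}|lborel. G z)"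
      unfolding set_lebesgue_integral_def using i unfolding set_integrable_def
      by (rule nn_integral_eq_integral) (simp add: G0)
    finally show ?thesis .
  qed
  have LG0: "(LINT z:{l..u}|lborel. G z) \<ge> 0" for l u
    unfolding set_lebesgue_integral_def by (intro integral_nonneg_AE) (simp add: G0)
  have ftc: "(LINT t:{l..u}|lborel. g' t) = g u - g l" if "l \<le> u" for l u
    unfolding set_lebesgue_integral_def
  proof (rule integral_FTC_atLeastAtMost[OF that])
    show "\<And>x. l \<le> x \<Longrightarrow> x \<le> u \<Longrightarrow> (g has_vector_derivative g' x) (at x within {l..u})"
      using d has_vector_derivative_at_within by blast
    show "continuous_on {l..u} g'" using c continuous_on_subset by blast
  qed
  have bound: "(cmod (g u - g l))^2 \<le> (u - l) * (LINT t:{l..u}|lborel. G t)" if lu: "l \<le> u" for l u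
  proof -
    have "cmod (LINT t:{l..u}|lborel. g' t) \<le> sqrt (LINT t:{l..u}|lborel. G t) * sqrt (u - l)"
    proof (rule cs_set[where f="\<lambda>z. cmod (g' z)" and g="\<lambda>z. 1"])
      show "(\<integral>\<^sup>+x. ennreal ((cmod (g' x))^2) * indicator {l..u} x \<partial>lborel) \<le> ennreal (LINT t:{l..u}|lborel. G t)"
        using nnI[of l u] by (simp add: G_def)
      show "(\<integral>\<^sup>+x. ennreal (1^2) * indicator {l..u} x \<partial>lborel) \<le> ennreal (u - l)"
        using lu by simp
    qed (use g'm LG0 lu in auto)
    hence "(cmod (g u - g l))^2 \<le> (sqrt (LINT t:{l..u}|lborel. G t) * sqrt (u - l))^2"
      using ftc[OF lu] by (intro power_mono) auto
    thus ?thesis using LG0[of l u] lu by (simp add: power_mult_distrib mult.commute)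
  qed
  define j1 where "j1 = (LINT t:{0..a/2}|lborel. G t)"
  define j2 where "j2 = (LINT t:{a/2..a}|lborel. G t)"
  have j10: "j1 \<ge> 0" and j20: "j2 \<ge> 0" using LG0 by (auto simp: j1_def j2_def)
  have mono: "(LINT t:{l..u}|lborel. G t) \<le> (LINT t:{l'..u'}|lborel. G t)" if "l' \<le> l" "u \<le> u'" for l u l' u'
  proof -
    have "ennreal (LINT t:{l..u}|lborel. G t) \<le> ennreal (LINT t:{l'..u'}|lborel. G t)"
      unfolding nnI[symmetric] using that by (intro nn_integral_mono) (simp split: split_indicator)
    thus ?thesis using LG0 by (simp add: ennreal_le_iff)
  qed
  have left: "(cmod (g z))^2 \<le> j1 * z" if "0 \<le> z" "z \<le> a/2" for z
  proof -
    have "(cmod (g z - g 0))^2 \<le> (z - 0) * (LINT t:{0..z}|lborel. G t)" using bound[of 0 z] that by simp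
    also have "\<dots> \<le> z * j1" unfolding j1_def using that mono[of 0 0 z "a/2"] by (simp add: mult_left_mono)
    finally show ?thesis using g0 by (simp add: mult.commute)
  qed
  have right: "(cmod (g z))^2 \<le> j2 * (a - z)" if "a/2 \<le> z" "z \<le> a" for z
  proof -
    have "(cmod (g a - g z))^2 \<le> (a - z) * (LINT t:{z..a}|lborel. G t)" using bound[of z a] that by simp
    also have "\<dots> \<le> (a - z) * j2" unfolding j2_def using that mono[of "a/2" z a a] by (simp add: mult_left_mono)
    finally show ?thesis using ga by (simp add: mult.commute norm_minus_commute)
  qed
  have "(\<integral>\<^sup>+z. ennreal ((cmod (g z))^2) * indicator {0<..<a} z \<partial>lborel)
      \<le> (\<integral>\<^sup>+z. ennreal j1 * (ennreal z * indicator {0..a/2} z) + ennreal j2 * (ennreal (a - z) * indicator {a/2..a} z) \<partial>lborel)"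
  proof (intro nn_integral_mono)
    fix z
    show "ennreal ((cmod (g z))^2) * indicator {0<..<a} z \<le> ennreal j1 * (ennreal z * indicator {0..a/2} z) + ennreal j2 * (ennreal (a - z) * indicator {a/2..a} z)"
    proof (cases "z \<in> {0<..<a}")
      case True
      show ?thesis
      proof (cases "z \<le> a/2")
        case True
        hence "ennreal ((cmod (g z))^2) \<le> ennreal j1 * ennreal z"
          using left[of z] \<open>z \<in> {0<..<a}\<close> j10 by (simp add: ennreal_mult[symmetric])
        thus ?thesis using True \<open>z \<in> {0<..<a}\<close> by (simp add: add_increasing2)
      next
        case False
        hence "ennreal ((cmod (g z))^2) \<le> ennreal j2 * ennreal (a - z)"
          using right[of z] \<open>z \<in> {0<..<a}\<close> j20 by (simp add: ennreal_mult[symmetric])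
        thus ?thesis using False \<open>z \<in> {0<..<a}\<close> by (simp add: add_increasing)
      qed
    qed simp
  qed
  also have "\<dots> = ennreal j1 * (\<integral>\<^sup>+z. ennreal z * indicator {0..a/2} z \<partial>lborel) + ennreal j2 * (\<integral>\<^sup>+z. ennreal (a - z) * indicator {a/2..a} z \<partial>lborel)"
    by (simp add: nn_integral_add nn_integral_cmult)
  also have "\<dots> = ennreal j1 * ennreal (a^2/8) + ennreal j2 * ennreal (a^2/8)"
    using a by (simp add: int_lin1 int_lin2 power_divide)
  also have "\<dots> = ennreal (a^2/8) * (ennreal j1 + ennreal j2)" by (simp add: algebra_simps)
  also have "ennreal j1 + ennreal j2 = (\<integral>\<^sup>+z. ennreal (G z) * indicator {0<..<a} z \<partial>lborel)"
  proof -
    have "ennreal j1 + ennreal j2 = (\<integral>\<^sup>+z. ennreal (G z) * indicator {0..a/2} z + ennreal (G z) * indicator {a/2..a} z \<partial>lborel)"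
      unfolding j1_def j2_def nnI[symmetric] using Gm by (simp add: nn_integral_add)
    also have "\<dots> = (\<integral>\<^sup>+z. ennreal (G z) * indicator {0<..<a} z \<partial>lborel)"
    proof (intro nn_integral_cong_AE)
      show "AE z in lborel. ennreal (G z) * indicator {0..a/2} z + ennreal (G z) * indicator {a/2..a} z = ennreal (G z) * indicator {0<..<a} z"
        using AE_lborel_singleton[of 0] AE_lborel_singleton[of a] AE_lborel_singleton[of "a/2"]
      proof eventually_elim
        case (elim z)
        thus ?case using a by (auto split: split_indicator)
      qed
    qed
    finally show ?thesis .
  qed
  finally show ?thesis by (simp add: G_def)
qed





lemma smooth_diff: assumes "smooth3 f" shows "f differentiable (at p)"
proof -
  have "Diter [] f differentiable (at p)" using assms unfolding smooth3_def by blast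
  thus ?thesis by simp
qed

lemma pd_Diter: "pd i f = Diter [unitv i] f"
  unfolding pd_def by simp

lemma smooth_pd_diff: assumes "smooth3 f" shows "pd i f differentiable (at p)"
proof -
  have "Diter [unitv i] f differentiable (at p)" using assms unfolding smooth3_def by blast
  thus ?thesis by (simp add: pd_Diter)
qed

lemma smooth_cont: "smooth3 f \<Longrightarrow> continuous_on UNIV f"
  by (intro continuous_at_imp_continuous_on ballI differentiable_imp_continuous_within smooth_diff)

lemma smooth_pd_cont: "smooth3 f \<Longrightarrow> continuous_on UNIV (pd i f)"
  by (intro continuous_at_imp_continuous_on ballI differentiable_imp_continuous_within smooth_pd_diff)


lemma vd: assumes "smooth3 f"
  shows "((\<lambda>z. f (x, y, z)) has_vector_derivative pd 2 f (x, y, z)) (at z)"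
proof -
  let ?D = "frechet_derivative f (at (x, y, z))"
  have fd: "(f has_derivative ?D) (at (x, y, z))"
    using smooth_diff[OF assms, of "(x, y, z)"] by (rule frechet_derivative_works[THEN iffD1])
  have pd: "((\<lambda>z::real. (x, y, z)) has_derivative (\<lambda>h. (0, 0, h))) (at z)"
    by (rule has_derivative_Pair[OF has_derivative_const has_derivative_Pair[OF has_derivative_const has_derivative_ident]])
  have "((f \<circ> (\<lambda>z. (x, y, z))) has_derivative (?D \<circ> (\<lambda>h. (0, 0, h)))) (at z)"
    by (rule diff_chain_at[OF pd fd])
  hence d1: "((\<lambda>z. f (x, y, z)) has_derivative (\<lambda>h. ?D (0, 0, h))) (at z)" unfolding o_def .
  have e: "(\<lambda>h. ?D (0, 0, h)) = (\<lambda>h. h *\<^sub>R ?D (0, 0, 1))"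
  proof
    fix h
    have "linear ?D" using fd by (rule has_derivative_linear)
    hence "?D (h *\<^sub>R (0, 0, 1)) = h *\<^sub>R ?D (0, 0, 1)" by (rule linear_scale)
    thus "?D (0, 0, h) = h *\<^sub>R ?D (0, 0, 1)" by simp
  qed
  have "((\<lambda>z. f (x, y, z)) has_derivative (\<lambda>h. h *\<^sub>R ?D (0, 0, 1))) (at z)" using d1 unfolding e .
  moreover have "pd 2 f (x, y, z) = ?D (0, 0, 1)" unfolding pd_def unitv_def by simp
  ultimately show ?thesis unfolding has_vector_derivative_def by metis
qed


lemma tonelli3:
  fixes F :: "pt \<Rightarrow> ennreal"
  assumes Fm: "F \<in> borel_measurable borel"
  shows "integral\<^sup>N lborel F = (\<integral>\<^sup>+x. \<integral>\<^sup>+y. \<integral>\<^sup>+z. F (x, y, z) \<partial>lborel \<partial>lborel \<partial>lborel)"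
proof -
  have m1: "F \<in> borel_measurable (lborel \<Otimes>\<^sub>M (lborel :: (real \<times> real) measure))"
    using Fm by (simp add: lborel_prod)
  have "integral\<^sup>N lborel F = integral\<^sup>N (lborel \<Otimes>\<^sub>M (lborel :: (real \<times> real) measure)) F"
    by (simp add: lborel_prod)
  also have "\<dots> = (\<integral>\<^sup>+x. \<integral>\<^sup>+yz. F (x, yz) \<partial>lborel \<partial>lborel)"
    by (rule lborel.nn_integral_fst[symmetric, OF m1])
  also have "\<dots> = (\<integral>\<^sup>+x. \<integral>\<^sup>+y. \<integral>\<^sup>+z. F (x, y, z) \<partial>lborel \<partial>lborel \<partial>lborel)"
  proof (intro nn_integral_cong)
    fix x :: real
    have m2: "(\<lambda>yz. F (x, yz)) \<in> borel_measurable (lborel \<Otimes>\<^sub>M (lborel :: real measure))"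
      using Fm by (simp add: lborel_prod)
    have "(\<integral>\<^sup>+yz. F (x, yz) \<partial>lborel) = integral\<^sup>N (lborel \<Otimes>\<^sub>M (lborel :: real measure)) (\<lambda>yz. F (x, yz))"
      by (simp add: lborel_prod)
    also have "\<dots> = (\<integral>\<^sup>+y. \<integral>\<^sup>+z. F (x, y, z) \<partial>lborel \<partial>lborel)"
      by (rule lborel.nn_integral_fst[symmetric, OF m2])
    finally show "(\<integral>\<^sup>+yz. F (x, yz) \<partial>lborel) = (\<integral>\<^sup>+y. \<integral>\<^sup>+z. F (x, y, z) \<partial>lborel \<partial>lborel)" .
  qed
  finally show ?thesis .
qed

lemma ind_cell: "indicator (cell a) (x, y, z) = (indicator {0<..<2*pi} x * indicator {0<..<2*pi} y * indicator {0<..<a} z :: ennreal)"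
  unfolding cell_def by (simp split: split_indicator)

lemma cont_meas: "continuous_on UNIV (f :: fld) \<Longrightarrow> f \<in> borel_measurable borel"
  by (rule borel_measurable_continuous_onI)



lemma poinc_smooth:
  assumes a: "a > 0" and sm: "smooth3 f" and vb: "vanish_bdry a f"
  shows "Qn a f \<le> ennreal (a^2/8) * Qn a (pd 2 f)"
proof -
  have fm[measurable]: "f \<in> borel_measurable borel" by (rule cont_meas[OF smooth_cont[OF sm]])
  have dm[measurable]: "pd 2 f \<in> borel_measurable borel" by (rule cont_meas[OF smooth_pd_cont[OF sm]])
  have cs[measurable]: "cell a \<in> sets borel" using cell_open by simp
  have "Qn a f = (\<integral>\<^sup>+x. \<integral>\<^sup>+y. \<integral>\<^sup>+z. ennreal ((cmod (f (x, y, z)))^2) * indicator (cell a) (x, y, z) \<partial>lborel \<partial>lborel \<partial>lborel)"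
    unfolding Qn_def by (rule tonelli3) measurable
  also have "\<dots> \<le> (\<integral>\<^sup>+x. \<integral>\<^sup>+y. \<integral>\<^sup>+z. ennreal (a^2/8) * (ennreal ((cmod (pd 2 f (x, y, z)))^2) * indicator (cell a) (x, y, z)) \<partial>lborel \<partial>lborel \<partial>lborel)"
  proof (rule nn_integral_mono, rule nn_integral_mono)
    fix x y
    show "(\<integral>\<^sup>+z. ennreal ((cmod (f (x, y, z)))^2) * indicator (cell a) (x, y, z) \<partial>lborel)
       \<le> (\<integral>\<^sup>+z. ennreal (a^2/8) * (ennreal ((cmod (pd 2 f (x, y, z)))^2) * indicator (cell a) (x, y, z)) \<partial>lborel)"
    proof (cases "x \<in> {0<..<2*pi} \<and> y \<in> {0<..<2*pi}")
      case True
      have m: "(\<lambda>z. ennreal ((cmod (pd 2 f (x, y, z)))^2) * indicator {0<..<a} z) \<in> borel_measurable lborel"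
        by measurable
      have cz: "continuous_on UNIV (\<lambda>z. pd 2 f (x, y, z))"
        by (rule continuous_on_compose2[OF smooth_pd_cont[OF sm]]) (auto intro!: continuous_intros)
      have "(\<integral>\<^sup>+z. ennreal ((cmod (f (x, y, z)))^2) * indicator {0<..<a} z \<partial>lborel)
         \<le> ennreal (a^2/8) * (\<integral>\<^sup>+z. ennreal ((cmod (pd 2 f (x, y, z)))^2) * indicator {0<..<a} z \<partial>lborel)"
        by (rule p1[OF a vd[OF sm] cz]) (use vb in \<open>auto simp: vanish_bdry_def\<close>)
      also have "\<dots> = (\<integral>\<^sup>+z. ennreal (a^2/8) * (ennreal ((cmod (pd 2 f (x, y, z)))^2) * indicator {0<..<a} z) \<partial>lborel)"
        by (rule nn_integral_cmult[OF m, symmetric])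
      finally show ?thesis using True by (simp add: ind_cell)
    qed (auto simp: ind_cell)
  qed
  also have "\<dots> = (\<integral>\<^sup>+p. ennreal (a^2/8) * (ennreal ((cmod (pd 2 f p))^2) * indicator (cell a) p) \<partial>lborel)"
    by (rule tonelli3[symmetric]) measurable
  also have "\<dots> = ennreal (a^2/8) * Qn a (pd 2 f)"
    unfolding Qn_def by (rule nn_integral_cmult) measurable
  finally show ?thesis .
qed




lemma cont_L2: assumes c: "continuous_on UNIV f" shows "L2 a f"
proof -
  define K where "K = {0..2*pi} \<times> {0..2*pi} \<times> {0..\<bar>a\<bar>}"
  have Kc: "compact K" unfolding K_def by (intro compact_Times compact_Icc)
  have sub: "cell a \<subseteq> K" unfolding cell_def K_def by auto
  have "compact (f ` K)" using Kc c continuous_on_subset by (intro compact_continuous_image) blast+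
  then obtain B where B: "\<And>p. p \<in> K \<Longrightarrow> cmod (f p) \<le> B"
    using compact_imp_bounded[of "f ` K"] unfolding bounded_iff by auto
  have "Qn a f \<le> (\<integral>\<^sup>+p. ennreal (B^2) * indicator K p \<partial>lborel)"
    unfolding Qn_def
  proof (intro nn_integral_mono)
    fix p
    show "ennreal ((cmod (f p))^2) * indicator (cell a) p \<le> ennreal (B^2) * indicator K p"
    proof (cases "p \<in> cell a")
      case True
      hence "p \<in> K" using sub by auto
      hence "(cmod (f p))^2 \<le> B^2" using B by (intro power_mono) auto
      thus ?thesis using True \<open>p \<in> K\<close> by (simp add: ennreal_leI)
    qed simp
  qed
  also have "\<dots> = ennreal (B^2) * emeasure lborel K"
    using Kc by (simp add: nn_integral_cmult_indicator borel_compact)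
  also have "\<dots> < \<infinity>" using emeasure_compact_finite[OF Kc] by (simp add: ennreal_mult_less_top)
  finally show ?thesis using borel_measurable_continuous_onI[OF c] by (simp add: L2_iff)
qed

lemma poinc_V:
  assumes a: "a > 0" and Lf: "L2 a f" and LD: "L2 a D"
    and T: "\<And>n. smooth3 (T n) \<and> vanish_bdry a (T n)"
    and c1: "(\<lambda>n. dist2 a (T n) f) \<longlonglongrightarrow> 0" and c2: "(\<lambda>n. dist2 a (pd 2 (T n)) D) \<longlonglongrightarrow> 0"
  shows "sq2 a f \<le> (a^2/8) * sq2 a D"
proof (rule lim_le[OF Lf LD _ _ _ _ c1 c2])
  show "L2 a (T n)" for n using T[of n] by (intro cont_L2 smooth_cont) auto
  show LP: "L2 a (pd 2 (T n))" for n using T[of n] by (intro cont_L2 smooth_pd_cont) auto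
  show "sq2 a (T n) \<le> a^2/8 * sq2 a (pd 2 (T n))" for n
  proof -
    have "ennreal (sq2 a (T n)) \<le> ennreal (a^2/8) * ennreal (sq2 a (pd 2 (T n)))"
      using poinc_smooth[OF a, of "T n"] T[of n] Qn_sq2[OF LP[of n]] Qn_sq2[of a "T n"] \<open>L2 a (T n)\<close> by simp
    also have "\<dots> = ennreal (a^2/8 * sq2 a (pd 2 (T n)))" by (rule ennreal_mult[symmetric]) (auto intro: sq2_nonneg)
    finally show ?thesis using sq2_nonneg by (simp add: ennreal_le_iff)
  qed
qed simp


lemma Qn_add_le:
  assumes fm: "f \<in> borel_measurable lborel" and gm: "g \<in> borel_measurable lborel"
  shows "Qn a (\<lambda>p. f p + g p) \<le> 2 * Qn a f + 2 * Qn a g"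
proof -
  have "Qn a (\<lambda>p. f p + g p) \<le> (\<integral>\<^sup>+p. ennreal 2 * (ennreal ((cmod (f p))^2) * indicator (cell a) p)
          + ennreal 2 * (ennreal ((cmod (g p))^2) * indicator (cell a) p) \<partial>lborel)"
    unfolding Qn_def
  proof (intro nn_integral_mono)
    fix p
    have "(cmod (f p + g p))^2 \<le> (cmod (f p) + cmod (g p))^2"
      by (intro power_mono norm_triangle_ineq) auto
    also have "\<dots> \<le> 2 * (cmod (f p))^2 + 2 * (cmod (g p))^2"
      using sum_squares_ge_zero[of "cmod (f p) - cmod (g p)" 0]
      by (simp add: power2_eq_square algebra_simps)
    finally have "(cmod (f p + g p))^2 \<le> 2 * (cmod (f p))^2 + 2 * (cmod (g p))^2" .
    hence i: "ennreal ((cmod (f p + g p))^2) \<le> ennreal (2 * (cmod (f p))^2 + 2 * (cmod (g p))^2)"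
      by (rule ennreal_leI)
    have e: "ennreal (2 * (cmod (f p))^2 + 2 * (cmod (g p))^2) = ennreal 2 * ennreal ((cmod (f p))^2) + ennreal 2 * ennreal ((cmod (g p))^2)"
      by (simp add: ennreal_mult)
    show "ennreal ((cmod (f p + g p))^2) * indicator (cell a) p \<le> ennreal 2 * (ennreal ((cmod (f p))^2) * indicator (cell a) p)
          + ennreal 2 * (ennreal ((cmod (g p))^2) * indicator (cell a) p)"
      using i unfolding e by (simp split: split_indicator)
  qed
  also have "\<dots> = 2 * Qn a f + 2 * Qn a g"
    unfolding Qn_def using fm gm by (simp add: nn_integral_add nn_integral_cmult)
  finally show ?thesis .
qed

lemma wbound:
  assumes a: "a > 0" and L0: "L2 a (Du 0)" and L1: "L2 a (Dv 1)"
  shows "\<exists>h. h \<in> borel_measurable lborel \<and> (\<forall>p. h p \<ge> 0)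
     \<and> (AE p in lborel. p \<in> cell a \<longrightarrow> cmod (wfun Du Dv p) \<le> h p)
     \<and> (\<integral>\<^sup>+p. ennreal ((h p)^2) * indicator (cell a) p \<partial>lborel) \<le> ennreal (2 * a^2 * (sq2 a (Du 0) + sq2 a (Dv 1)))"
proof -
  define G where "G p = Du 0 p + Dv 1 p" for p
  have m0: "Du 0 \<in> borel_measurable borel" and m1: "Dv 1 \<in> borel_measurable borel"
    using L0 L1 L2_meas by auto
  have Gm[measurable]: "G \<in> borel_measurable borel" unfolding G_def using m0 m1 by measurable
  define N where "N x y = (\<integral>\<^sup>+t. ennreal ((cmod (G (x, y, t)))^2) * indicator {0<..<a} t \<partial>lborel)" for x y
  have N2m: "(\<lambda>q. N (fst q) (snd q)) \<in> borel_measurable (lborel :: (real \<times> real) measure)"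
  proof -
    have c: "continuous_on UNIV (\<lambda>qt::(real \<times> real) \<times> real. (fst (fst qt), snd (fst qt), snd qt))"
      by (intro continuous_intros)
    have G2[measurable]: "(\<lambda>qt::(real \<times> real) \<times> real. G (fst (fst qt), snd (fst qt), snd qt)) \<in> borel_measurable borel"
      using measurable_comp[OF borel_measurable_continuous_onI[OF c] Gm] by (simp add: o_def)
    have sn[measurable]: "(snd :: (real \<times> real) \<times> real \<Rightarrow> real) \<in> borel_measurable borel"
      by (rule borel_measurable_continuous_onI) (intro continuous_intros)
    have "(\<lambda>qt::(real \<times> real) \<times> real. ennreal ((cmod (G (fst (fst qt), snd (fst qt), snd qt)))^2) * indicator {0<..<a} (snd qt))
      \<in> borel_measurable borel" by measurable
    hence "(\<lambda>qt. ennreal ((cmod (G (fst (fst qt), snd (fst qt), snd qt)))^2) * indicator {0<..<a} (snd qt))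
      \<in> borel_measurable ((lborel :: (real \<times> real) measure) \<Otimes>\<^sub>M (lborel :: real measure))"
      unfolding lborel_prod by simp
    from lborel.borel_measurable_nn_integral_fst[OF this] show ?thesis
      unfolding N_def by simp
  qed
  have Nm[measurable]: "(\<lambda>p::pt. N (fst p) (fst (snd p))) \<in> borel_measurable borel"
  proof -
    have "(\<lambda>q. N (fst q) (snd q)) \<in> borel_measurable borel" using N2m by simp
    moreover have "(\<lambda>p::pt. (fst p, fst (snd p))) \<in> borel_measurable borel"
      by (rule borel_measurable_continuous_onI) (intro continuous_intros)
    ultimately have "(\<lambda>q. N (fst q) (snd q)) \<circ> (\<lambda>p::pt. (fst p, fst (snd p))) \<in> borel_measurable borel"
      by (rule measurable_comp[rotated])
    thus ?thesis by (simp add: o_def)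
  qed
  have cs[measurable]: "cell a \<in> sets borel" using cell_open by simp
  have GL: "Qn a G \<le> 2 * Qn a (Du 0) + 2 * Qn a (Dv 1)"
    unfolding G_def by (rule Qn_add_le) (use m0 m1 in auto)
  have key: "(\<integral>\<^sup>+p. ennreal a * N (fst p) (fst (snd p)) * indicator (cell a) p \<partial>lborel) = ennreal (a * a) * Qn a G"
  proof -
    have "(\<integral>\<^sup>+p. ennreal a * N (fst p) (fst (snd p)) * indicator (cell a) p \<partial>lborel)
       = (\<integral>\<^sup>+x. \<integral>\<^sup>+y. \<integral>\<^sup>+z. ennreal a * N x y * indicator (cell a) (x, y, z) \<partial>lborel \<partial>lborel \<partial>lborel)"
      by (rule tonelli3[where F="\<lambda>p. ennreal a * N (fst p) (fst (snd p)) * indicator (cell a) p", simplified]) measurable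
    also have "\<dots> = (\<integral>\<^sup>+x. \<integral>\<^sup>+y. \<integral>\<^sup>+t. ennreal (a * a) * (ennreal ((cmod (G (x, y, t)))^2) * indicator (cell a) (x, y, t)) \<partial>lborel \<partial>lborel \<partial>lborel)"
    proof (rule nn_integral_cong, rule nn_integral_cong)
      fix x y :: real
      show "(\<integral>\<^sup>+z. ennreal a * N x y * indicator (cell a) (x, y, z) \<partial>lborel)
          = (\<integral>\<^sup>+t. ennreal (a * a) * (ennreal ((cmod (G (x, y, t)))^2) * indicator (cell a) (x, y, t)) \<partial>lborel)"
      proof (cases "x \<in> {0<..<2*pi} \<and> y \<in> {0<..<2*pi}")
        case True
        have mt: "(\<lambda>t. ennreal ((cmod (G (x, y, t)))^2) * indicator {0<..<a} t) \<in> borel_measurable lborel"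
          by measurable
        have "(\<integral>\<^sup>+z. ennreal a * N x y * indicator (cell a) (x, y, z) \<partial>lborel)
            = (\<integral>\<^sup>+z. (ennreal a * N x y) * indicator {0<..<a} z \<partial>lborel)"
          using True by (intro nn_integral_cong) (simp add: ind_cell)
        also have "\<dots> = ennreal a * N x y * ennreal a"
          using a by (simp add: nn_integral_cmult_indicator)
        also have "\<dots> = ennreal (a * a) * N x y" using a by (simp add: ennreal_mult mult_ac)
        also have "\<dots> = (\<integral>\<^sup>+t. ennreal (a * a) * (ennreal ((cmod (G (x, y, t)))^2) * indicator {0<..<a} t) \<partial>lborel)"
          unfolding N_def by (rule nn_integral_cmult[OF mt, symmetric])
        also have "\<dots> = (\<integral>\<^sup>+t. ennreal (a * a) * (ennreal ((cmod (G (x, y, t)))^2) * indicator (cell a) (x, y, t)) \<partial>lborel)"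
          using True by (intro nn_integral_cong) (simp add: ind_cell)
        finally show ?thesis .
      qed (auto simp: ind_cell)
    qed
    also have "\<dots> = (\<integral>\<^sup>+p. ennreal (a * a) * (ennreal ((cmod (G p))^2) * indicator (cell a) p) \<partial>lborel)"
      by (rule tonelli3[symmetric]) measurable
    also have "\<dots> = ennreal (a * a) * Qn a G"
      unfolding Qn_def by (rule nn_integral_cmult) measurable
    finally show ?thesis .
  qed
  have fin: "ennreal (a * a) * Qn a G < \<infinity>"
  proof -
    have "Qn a (Du 0) < \<infinity>" "Qn a (Dv 1) < \<infinity>" using L0 L1 by (auto simp: L2_iff)
    hence "2 * Qn a (Du 0) + 2 * Qn a (Dv 1) < \<infinity>" by (simp add: ennreal_mult_less_top)
    hence "Qn a G < \<infinity>" using GL by (rule le_less_trans[rotated])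
    thus ?thesis by (simp add: ennreal_mult_less_top)
  qed
  have AEfin: "AE p in lborel. ennreal a * N (fst p) (fst (snd p)) * indicator (cell a) p \<noteq> \<infinity>"
    by (rule nn_integral_PInf_AE) (use key fin in auto)
  define h where "h p = sqrt (a * enn2real (N (fst p) (fst (snd p))))" for p :: pt
  have hm: "h \<in> borel_measurable lborel" unfolding h_def by measurable
  have h0: "\<forall>p. h p \<ge> 0" unfolding h_def using a by (simp add: enn2real_nonneg)
  have hint: "(\<integral>\<^sup>+p. ennreal ((h p)^2) * indicator (cell a) p \<partial>lborel) \<le> ennreal (2 * a^2 * (sq2 a (Du 0) + sq2 a (Dv 1)))"
  proof -
    have "(\<integral>\<^sup>+p. ennreal ((h p)^2) * indicator (cell a) p \<partial>lborel)
        \<le> (\<integral>\<^sup>+p. ennreal a * N (fst p) (fst (snd p)) * indicator (cell a) p \<partial>lborel)"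
    proof (intro nn_integral_mono)
      fix p
      have "ennreal ((h p)^2) = ennreal a * ennreal (enn2real (N (fst p) (fst (snd p))))"
        unfolding h_def using a by (simp add: ennreal_mult enn2real_nonneg)
      also have "\<dots> \<le> ennreal a * N (fst p) (fst (snd p))"
        by (intro mult_left_mono) (auto simp: ennreal_enn2real_if)
      finally show "ennreal ((h p)^2) * indicator (cell a) p \<le> ennreal a * N (fst p) (fst (snd p)) * indicator (cell a) p"
        by (simp split: split_indicator)
    qed
    also have "\<dots> = ennreal (a * a) * Qn a G" by (rule key)
    also have "\<dots> \<le> ennreal (a * a) * (2 * Qn a (Du 0) + 2 * Qn a (Dv 1))" by (intro mult_left_mono GL) auto
    also have "\<dots> = ennreal (2 * a^2 * (sq2 a (Du 0) + sq2 a (Dv 1)))"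
    proof -
      have e0: "(2::ennreal) * Qn a (Du 0) = ennreal (2 * sq2 a (Du 0))"
        using Qn_sq2[OF L0] sq2_nonneg[of a "Du 0"] by (simp add: ennreal_mult)
      have e1: "(2::ennreal) * Qn a (Dv 1) = ennreal (2 * sq2 a (Dv 1))"
        using Qn_sq2[OF L1] sq2_nonneg[of a "Dv 1"] by (simp add: ennreal_mult)
      have e2: "ennreal (2 * sq2 a (Du 0)) + ennreal (2 * sq2 a (Dv 1)) = ennreal (2 * sq2 a (Du 0) + 2 * sq2 a (Dv 1))"
        by (rule ennreal_plus[symmetric]) (auto intro: sq2_nonneg)
      have e3: "ennreal (a * a) * ennreal (2 * sq2 a (Du 0) + 2 * sq2 a (Dv 1)) = ennreal (a * a * (2 * sq2 a (Du 0) + 2 * sq2 a (Dv 1)))"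
        by (rule ennreal_mult[symmetric]) (use sq2_nonneg[of a "Du 0"] sq2_nonneg[of a "Dv 1"] in auto)
      have e4: "a * a * (2 * sq2 a (Du 0) + 2 * sq2 a (Dv 1)) = 2 * a^2 * (sq2 a (Du 0) + sq2 a (Dv 1))"
        by (simp add: power2_eq_square algebra_simps)
      show ?thesis unfolding e0 e1 e2 e3 e4 ..
    qed
    finally show ?thesis .
  qed
  have hae: "AE p in lborel. p \<in> cell a \<longrightarrow> cmod (wfun Du Dv p) \<le> h p"
    using AEfin
  proof eventually_elim
    case (elim p)
    show ?case
    proof
      assume pc: "p \<in> cell a"
      obtain x y z where p: "p = (x, y, z)" by (cases p) auto
      have z: "0 < z" "z < a" and xy: "x \<in> {0<..<2*pi}" "y \<in> {0<..<2*pi}" using pc unfolding p cell_def by auto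
      have Nf: "N x y \<noteq> \<infinity>" using elim pc a unfolding p by (auto simp: ennreal_mult_eq_top_iff)
      have gm: "(\<lambda>t. cmod (G (x, y, t))) \<in> borel_measurable lborel" by measurable
      have "cmod (LINT t:{0..z}|lborel. G (x, y, t)) \<le> sqrt (enn2real (N x y)) * sqrt z"
      proof (rule cs_set[where f="\<lambda>t. cmod (G (x, y, t))" and g="\<lambda>t. 1"])
        have "(\<integral>\<^sup>+t. ennreal ((cmod (G (x, y, t)))^2) * indicator {0..z} t \<partial>lborel) \<le> N x y"
          unfolding N_def
        proof (rule nn_integral_mono_AE)
          show "AE t in lborel. ennreal ((cmod (G (x, y, t)))^2) * indicator {0..z} t \<le> ennreal ((cmod (G (x, y, t)))^2) * indicator {0<..<a} t"
            using AE_lborel_singleton[of 0]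
          proof eventually_elim
            case (elim t) thus ?case using z by (auto split: split_indicator)
          qed
        qed
        thus "(\<integral>\<^sup>+t. ennreal ((cmod (G (x, y, t)))^2) * indicator {0..z} t \<partial>lborel) \<le> ennreal (enn2real (N x y))"
          using Nf by (simp add: ennreal_enn2real_if)
        show "(\<integral>\<^sup>+t. ennreal (1^2) * indicator {0..z} t \<partial>lborel) \<le> ennreal z" using z by simp
      qed (use gm z in \<open>auto simp: enn2real_nonneg\<close>)
      also have "\<dots> \<le> sqrt (enn2real (N x y)) * sqrt a" using z by (intro mult_left_mono) auto
      also have "\<dots> = h p" unfolding h_def p by (simp add: real_sqrt_mult)
      finally have "cmod (LINT t:{0..z}|lborel. G (x, y, t)) \<le> h p" .
      moreover have "wfun Du Dv p = - (LINT t:{0..z}|lborel. G (x, y, t))"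
        unfolding wfun_def p G_def by simp
      ultimately show "cmod (wfun Du Dv p) \<le> h p" by simp
    qed
  qed
  show ?thesis using hm h0 hae hint by blast
qed


lemma cs_L2: assumes Lf: "L2 a f" and Lg: "L2 a g"
  shows "cmod (LINT p:cell a|lborel. f p * cnj (g p)) \<le> sqrt (sq2 a f) * sqrt (sq2 a g)"
proof (rule cs_set[where f="\<lambda>p. cmod (f p)" and g="\<lambda>p. cmod (g p)"])
  show "(\<lambda>p. cmod (f p)) \<in> borel_measurable lborel" using L2_meas[OF Lf] by measurable
  show "(\<lambda>p. cmod (g p)) \<in> borel_measurable lborel" using L2_meas[OF Lg] by measurable
  show "(\<integral>\<^sup>+x. ennreal ((cmod (f x))^2) * indicator (cell a) x \<partial>lborel) \<le> ennreal (sq2 a f)"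
    using Qn_sq2[OF Lf] unfolding Qn_def by simp
  show "(\<integral>\<^sup>+x. ennreal ((cmod (g x))^2) * indicator (cell a) x \<partial>lborel) \<le> ennreal (sq2 a g)"
    using Qn_sq2[OF Lg] unfolding Qn_def by simp
qed (use cell_open in \<open>auto simp: norm_mult sq2_nonneg\<close>)

lemma prod_int: assumes Lf: "L2 a f" and Lg: "L2 a g"
  shows "set_integrable lborel (cell a) (\<lambda>p. f p * cnj (g p))"
proof -
  have fm: "(\<lambda>p. indicator (cell a) p * cmod (f p)) \<in> borel_measurable lborel" using L2_meas[OF Lf] by measurable
  have gm: "(\<lambda>p. indicator (cell a) p * cmod (g p)) \<in> borel_measurable lborel" using L2_meas[OF Lg] by measurable
  have "(\<integral>\<^sup>+p. ennreal (norm (indicator (cell a) p *\<^sub>R (f p * cnj (g p)))) \<partial>lborel)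
      = (\<integral>\<^sup>+p. ennreal (indicator (cell a) p * cmod (f p) * (indicator (cell a) p * cmod (g p))) \<partial>lborel)"
    by (intro nn_integral_cong) (simp split: split_indicator add: norm_mult)
  also have "\<dots> \<le> ennreal (sqrt (sq2 a f) * sqrt (sq2 a g))"
  proof (rule cs_nn[OF fm gm])
    have "(\<integral>\<^sup>+x. ennreal ((indicator (cell a) x * cmod (f x))^2) \<partial>lborel) = Qn a f"
      unfolding Qn_def by (intro nn_integral_cong) (simp split: split_indicator)
    thus "(\<integral>\<^sup>+x. ennreal ((indicator (cell a) x * cmod (f x))^2) \<partial>lborel) \<le> ennreal (sq2 a f)"
      using Qn_sq2[OF Lf] by simp
    have "(\<integral>\<^sup>+x. ennreal ((indicator (cell a) x * cmod (g x))^2) \<partial>lborel) = Qn a g"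
      unfolding Qn_def by (intro nn_integral_cong) (simp split: split_indicator)
    thus "(\<integral>\<^sup>+x. ennreal ((indicator (cell a) x * cmod (g x))^2) \<partial>lborel) \<le> ennreal (sq2 a g)"
      using Qn_sq2[OF Lg] by simp
  qed (auto simp: sq2_nonneg)
  also have "\<dots> < \<infinity>" by simp
  finally have fin: "(\<integral>\<^sup>+p. ennreal (norm (indicator (cell a) p *\<^sub>R (f p * cnj (g p)))) \<partial>lborel) < \<infinity>" .
  have "(\<lambda>x. indicator (cell a) x *\<^sub>R (f x * cnj (g x))) \<in> borel_measurable lborel"
  proof -
    have cc: "cnj \<in> borel_measurable borel"
      by (rule borel_measurable_continuous_onI) (intro continuous_intros)
    have [measurable]: "(\<lambda>x. cnj (g x)) \<in> borel_measurable borel"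
      using measurable_comp[OF L2_meas[OF Lg, simplified] cc] by (simp add: o_def)
    show ?thesis using L2_meas[OF Lf] by measurable
  qed
  with fin show ?thesis unfolding set_integrable_def
    by (subst integrable_iff_bounded) auto
qed

lemma innerV_expand:
  assumes L: "\<And>i. i < 3 \<Longrightarrow> L2 a (Du i) \<and> L2 a (Dv i) \<and> L2 a (D\<theta> i) \<and> L2 a (Du' i) \<and> L2 a (Dv' i) \<and> L2 a (D\<theta>' i)"
  shows "innerV a \<beta> \<gamma> Du Dv D\<theta> Du' Dv' D\<theta>' = (\<Sum>i<3. (LINT p:cell a|lborel. Du i p * cnj (Du' i p))
     + (LINT p:cell a|lborel. Dv i p * cnj (Dv' i p)) + of_real (\<beta>/\<gamma>) * (LINT p:cell a|lborel. D\<theta> i p * cnj (D\<theta>' i p)))"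
proof -
  define T where "T i p = Du i p * cnj (Du' i p) + Dv i p * cnj (Dv' i p) + of_real (\<beta>/\<gamma>) * D\<theta> i p * cnj (D\<theta>' i p)" for i p
  have Ti: "set_integrable lborel (cell a) (T i) \<and> (LINT p:cell a|lborel. T i p) = (LINT p:cell a|lborel. Du i p * cnj (Du' i p))
     + (LINT p:cell a|lborel. Dv i p * cnj (Dv' i p)) + of_real (\<beta>/\<gamma>) * (LINT p:cell a|lborel. D\<theta> i p * cnj (D\<theta>' i p))"
    if i: "i < 3" for i
  proof -
    have i1: "set_integrable lborel (cell a) (\<lambda>p. Du i p * cnj (Du' i p))" using L[OF i] by (intro prod_int) auto
    have i2: "set_integrable lborel (cell a) (\<lambda>p. Dv i p * cnj (Dv' i p))" using L[OF i] by (intro prod_int) auto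
    have i3: "set_integrable lborel (cell a) (\<lambda>p. of_real (\<beta>/\<gamma>) * (D\<theta> i p * cnj (D\<theta>' i p)))"
      using L[OF i] by (intro set_integrable_mult_right prod_int) auto
    have e: "T i = (\<lambda>p. (Du i p * cnj (Du' i p) + Dv i p * cnj (Dv' i p)) + of_real (\<beta>/\<gamma>) * (D\<theta> i p * cnj (D\<theta>' i p)))"
      unfolding T_def by (simp add: mult.assoc)
    have i12: "set_integrable lborel (cell a) (\<lambda>p. Du i p * cnj (Du' i p) + Dv i p * cnj (Dv' i p))"
      using i1 i2 by (rule set_integral_add)
    show ?thesis unfolding e
      using i1 i2 i3 i12 by (simp add: set_integral_add)
  qed
  have "innerV a \<beta> \<gamma> Du Dv D\<theta> Du' Dv' D\<theta>' = (LINT p:cell a|lborel. (\<Sum>i<3. T i p))"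
    unfolding innerV_def T_def ..
  also have "\<dots> = (\<Sum>i<3. (LINT p:cell a|lborel. T i p))"
  proof -
    have "\<And>i. i \<in> {..<3} \<Longrightarrow> integrable lborel (\<lambda>x. indicator (cell a) x *\<^sub>R T i x)"
      using Ti by (auto simp: set_integrable_def)
    from Bochner_Integration.integral_sum[OF this] show ?thesis
      unfolding set_lebesgue_integral_def scaleR_sum_right .
  qed
  also have "\<dots> = (\<Sum>i<3. (LINT p:cell a|lborel. Du i p * cnj (Du' i p))
     + (LINT p:cell a|lborel. Dv i p * cnj (Dv' i p)) + of_real (\<beta>/\<gamma>) * (LINT p:cell a|lborel. D\<theta> i p * cnj (D\<theta>' i p)))"
    using Ti by (intro sum.cong) auto
  finally show ?thesis .
qed

lemma self_int: "(LINT p:cell a|lborel. f p * cnj (f p)) = of_real (sq2 a f)"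
  unfolding sq2_def complex_norm_square[symmetric] by (rule set_integral_complex_of_real)

lemma cs3: fixes x1 x2 x3 y1 y2 y3 :: real
  shows "x1 * y1 + x2 * y2 + x3 * y3 \<le> sqrt (x1^2 + x2^2 + x3^2) * sqrt (y1^2 + y2^2 + y3^2)"
proof -
  have e: "(x1^2 + x2^2 + x3^2) * (y1^2 + y2^2 + y3^2) - (x1 * y1 + x2 * y2 + x3 * y3)^2
     = (x1 * y2 - x2 * y1)^2 + (x1 * y3 - x3 * y1)^2 + (x2 * y3 - x3 * y2)^2"
    by (simp add: power2_eq_square algebra_simps)
  have "(x1 * y1 + x2 * y2 + x3 * y3)^2 \<le> (x1^2 + x2^2 + x3^2) * (y1^2 + y2^2 + y3^2)"
    using e by (smt (verit) zero_le_power2)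
  hence "sqrt ((x1 * y1 + x2 * y2 + x3 * y3)^2) \<le> sqrt ((x1^2 + x2^2 + x3^2) * (y1^2 + y2^2 + y3^2))"
    by (rule real_sqrt_le_mono)
  thus ?thesis by (simp add: real_sqrt_mult)
qed


lemma sum3: "(\<Sum>i<(3::nat). f i) = f 0 + f 1 + f 2"
  by (simp add: eval_nat_numeral)

lemma PV1: assumes a: "a > 0" and X: "inV1 a u v Du Dv"
  shows "sq2 a u \<le> a^2/8 * sq2 a (Du 2) \<and> sq2 a v \<le> a^2/8 * sq2 a (Dv 2)"
proof -
  have two: "(2::nat) < 3" by simp
  from X have Lu: "L2 a u" and Lv: "L2 a v" and LD: "\<forall>i<3. L2 a (Du i) \<and> L2 a (Dv i)"
    and ex: "\<exists>U V. (\<forall>n. adm1 a (U n) (V n)) \<and>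
        (\<lambda>n. dist2 a (U n) u) \<longlonglongrightarrow> 0 \<and> (\<lambda>n. dist2 a (V n) v) \<longlonglongrightarrow> 0 \<and>
        (\<forall>i<3. (\<lambda>n. dist2 a (pd i (U n)) (Du i)) \<longlonglongrightarrow> 0 \<and>
               (\<lambda>n. dist2 a (pd i (V n)) (Dv i)) \<longlonglongrightarrow> 0)"
    unfolding inV1_def by blast+
  from ex obtain U V where adm: "\<forall>n. adm1 a (U n) (V n)"
    and c1: "(\<lambda>n. dist2 a (U n) u) \<longlonglongrightarrow> 0" and c2: "(\<lambda>n. dist2 a (V n) v) \<longlonglongrightarrow> 0"
    and ci: "\<forall>i<3. (\<lambda>n. dist2 a (pd i (U n)) (Du i)) \<longlonglongrightarrow> 0 \<and> (\<lambda>n. dist2 a (pd i (V n)) (Dv i)) \<longlonglongrightarrow> 0"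
    by (elim exE conjE)
  have c3: "(\<lambda>n. dist2 a (pd 2 (U n)) (Du 2)) \<longlonglongrightarrow> 0" and c4: "(\<lambda>n. dist2 a (pd 2 (V n)) (Dv 2)) \<longlonglongrightarrow> 0"
    using ci two by auto
  have L3: "L2 a (Du 2)" "L2 a (Dv 2)" using LD two by auto
  show ?thesis
  proof
    show "sq2 a u \<le> a^2/8 * sq2 a (Du 2)"
      by (rule poinc_V[OF a Lu L3(1) _ c1 c3]) (use adm in \<open>auto simp: adm1_def\<close>)
    show "sq2 a v \<le> a^2/8 * sq2 a (Dv 2)"
      by (rule poinc_V[OF a Lv L3(2) _ c2 c4]) (use adm in \<open>auto simp: adm1_def\<close>)
  qed
qed

lemma PV2: assumes a: "a > 0" and X: "inV2 a \<theta> D\<theta>"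
  shows "sq2 a \<theta> \<le> a^2/8 * sq2 a (D\<theta> 2)"
proof -
  have two: "(2::nat) < 3" by simp
  from X have Lu: "L2 a \<theta>" and LD: "\<forall>i<3. L2 a (D\<theta> i)"
    and ex: "\<exists>T. (\<forall>n. adm2 a (T n)) \<and> (\<lambda>n. dist2 a (T n) \<theta>) \<longlonglongrightarrow> 0 \<and>
        (\<forall>i<3. (\<lambda>n. dist2 a (pd i (T n)) (D\<theta> i)) \<longlonglongrightarrow> 0)"
    unfolding inV2_def by blast+
  from ex obtain T where adm: "\<forall>n. adm2 a (T n)"
    and c1: "(\<lambda>n. dist2 a (T n) \<theta>) \<longlonglongrightarrow> 0"
    and ci: "\<forall>i<3. (\<lambda>n. dist2 a (pd i (T n)) (D\<theta> i)) \<longlonglongrightarrow> 0"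
    by (elim exE conjE)
  have c3: "(\<lambda>n. dist2 a (pd 2 (T n)) (D\<theta> 2)) \<longlonglongrightarrow> 0" using ci two by auto
  have L3: "L2 a (D\<theta> 2)" using LD two by auto
  show ?thesis
    by (rule poinc_V[OF a Lu L3 _ c1 c3]) (use adm in \<open>auto simp: adm2_def\<close>)
qed


lemma normV_eq:
  assumes L: "\<And>i. i < 3 \<Longrightarrow> L2 a (Du i) \<and> L2 a (Dv i) \<and> L2 a (D\<theta> i)"
  shows "normV a \<beta> \<gamma> Du Dv D\<theta> = sqrt (\<Sum>i<3. sq2 a (Du i) + sq2 a (Dv i) + \<beta>/\<gamma> * sq2 a (D\<theta> i))"
proof -
  have "innerV a \<beta> \<gamma> Du Dv D\<theta> Du Dv D\<theta> = (\<Sum>i<3. of_real (sq2 a (Du i)) + of_real (sq2 a (Dv i)) + of_real (\<beta>/\<gamma>) * of_real (sq2 a (D\<theta> i)))"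
    by (subst innerV_expand) (use L in \<open>auto simp: self_int\<close>)
  thus ?thesis unfolding normV_def by (simp add: sum3)
qed

lemma inner_bound:
  assumes L: "\<And>i. i < 3 \<Longrightarrow> L2 a (Du i) \<and> L2 a (Dv i) \<and> L2 a (D\<theta> i) \<and> L2 a (Du' i) \<and> L2 a (Dv' i) \<and> L2 a (D\<theta>' i)"
    and k: "\<beta>/\<gamma> \<ge> 0"
  shows "cmod (innerV a \<beta> \<gamma> Du Dv D\<theta> Du' Dv' D\<theta>') \<le> normV a \<beta> \<gamma> Du Dv D\<theta> * normV a \<beta> \<gamma> Du' Dv' D\<theta>'"
proof -
  define k where "k = \<beta>/\<gamma>"
  define A where "A i = sq2 a (Du i)" for i
  define B where "B i = sq2 a (Dv i)" for i
  define C where "C i = sq2 a (D\<theta> i)" for i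
  define A' where "A' i = sq2 a (Du' i)" for i
  define B' where "B' i = sq2 a (Dv' i)" for i
  define C' where "C' i = sq2 a (D\<theta>' i)" for i
  define P where "P i = A i + B i + k * C i" for i
  define P' where "P' i = A' i + B' i + k * C' i" for i
  have k0: "k \<ge> 0" using k by (simp add: k_def)
  have nn: "A i \<ge> 0" "B i \<ge> 0" "C i \<ge> 0" "A' i \<ge> 0" "B' i \<ge> 0" "C' i \<ge> 0" for i
    by (simp_all add: A_def B_def C_def A'_def B'_def C'_def sq2_nonneg)
  have P0: "P i \<ge> 0" "P' i \<ge> 0" for i using nn k0 by (simp_all add: P_def P'_def)
  have nX: "normV a \<beta> \<gamma> Du Dv D\<theta> = sqrt (P 0 + P 1 + P 2)"
    using L
    by (subst normV_eq) (auto simp: sum3 P_def A_def B_def C_def k_def)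
  have nX': "normV a \<beta> \<gamma> Du' Dv' D\<theta>' = sqrt (P' 0 + P' 1 + P' 2)"
    using L by (subst normV_eq) (auto simp: sum3 P'_def A'_def B'_def C'_def k_def)
  have trm: "cmod ((LINT p:cell a|lborel. Du i p * cnj (Du' i p))
     + (LINT p:cell a|lborel. Dv i p * cnj (Dv' i p)) + of_real (\<beta>/\<gamma>) * (LINT p:cell a|lborel. D\<theta> i p * cnj (D\<theta>' i p)))
     \<le> sqrt (P i) * sqrt (P' i)" if i: "i < 3" for i
  proof -
    have "cmod ((LINT p:cell a|lborel. Du i p * cnj (Du' i p))
     + (LINT p:cell a|lborel. Dv i p * cnj (Dv' i p)) + of_real (\<beta>/\<gamma>) * (LINT p:cell a|lborel. D\<theta> i p * cnj (D\<theta>' i p)))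
      \<le> cmod (LINT p:cell a|lborel. Du i p * cnj (Du' i p)) + cmod (LINT p:cell a|lborel. Dv i p * cnj (Dv' i p))
        + k * cmod (LINT p:cell a|lborel. D\<theta> i p * cnj (D\<theta>' i p))"
      using k0 by (smt (verit) k_def norm_mult norm_of_real norm_triangle_ineq)
    also have "\<dots> \<le> sqrt (A i) * sqrt (A' i) + sqrt (B i) * sqrt (B' i) + k * (sqrt (C i) * sqrt (C' i))"
      unfolding A_def B_def C_def A'_def B'_def C'_def using L[OF i] k0
      by (intro add_mono mult_left_mono cs_L2) auto
    also have "\<dots> = sqrt (A i) * sqrt (A' i) + sqrt (B i) * sqrt (B' i) + (sqrt k * sqrt (C i)) * (sqrt k * sqrt (C' i))"
      using k0 by (simp add: algebra_simps)
    also have "\<dots> \<le> sqrt ((sqrt (A i))^2 + (sqrt (B i))^2 + (sqrt k * sqrt (C i))^2) * sqrt ((sqrt (A' i))^2 + (sqrt (B' i))^2 + (sqrt k * sqrt (C' i))^2)"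
      by (rule cs3)
    also have "\<dots> = sqrt (P i) * sqrt (P' i)"
      using nn k0 by (simp add: P_def P'_def power_mult_distrib)
    finally show ?thesis .
  qed
  have "cmod (innerV a \<beta> \<gamma> Du Dv D\<theta> Du' Dv' D\<theta>') = cmod (\<Sum>i<3. (LINT p:cell a|lborel. Du i p * cnj (Du' i p))
     + (LINT p:cell a|lborel. Dv i p * cnj (Dv' i p)) + of_real (\<beta>/\<gamma>) * (LINT p:cell a|lborel. D\<theta> i p * cnj (D\<theta>' i p)))"
    by (subst innerV_expand) (use L in auto)
  also have "\<dots> \<le> (\<Sum>i<3. cmod ((LINT p:cell a|lborel. Du i p * cnj (Du' i p))
     + (LINT p:cell a|lborel. Dv i p * cnj (Dv' i p)) + of_real (\<beta>/\<gamma>) * (LINT p:cell a|lborel. D\<theta> i p * cnj (D\<theta>' i p))))"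
    by (rule norm_sum)
  also have "\<dots> \<le> (\<Sum>i<3. sqrt (P i) * sqrt (P' i))"
    by (rule sum_mono) (use trm in auto)
  also have "\<dots> = sqrt (P 0) * sqrt (P' 0) + sqrt (P 1) * sqrt (P' 1) + sqrt (P 2) * sqrt (P' 2)" by (rule sum3)
  also have "\<dots> \<le> sqrt ((sqrt (P 0))^2 + (sqrt (P 1))^2 + (sqrt (P 2))^2) * sqrt ((sqrt (P' 0))^2 + (sqrt (P' 1))^2 + (sqrt (P' 2))^2)"
    by (rule cs3)
  also have "\<dots> = normV a \<beta> \<gamma> Du Dv D\<theta> * normV a \<beta> \<gamma> Du' Dv' D\<theta>'"
    unfolding nX nX' using P0 by simp
  finally show ?thesis .
qed


lemma B_bound:
  assumes a: "a > 0" and Lt: "L2 a \<theta>" and Lt': "L2 a \<theta>'"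
    and L0: "L2 a (Du 0)" and L1: "L2 a (Dv 1)" and L0': "L2 a (Du' 0)" and L1': "L2 a (Dv' 1)"
  shows "cmod (Bform a \<theta> Du Dv \<theta>' Du' Dv') \<le> sqrt (sq2 a \<theta>) * sqrt (2 * a^2 * (sq2 a (Du' 0) + sq2 a (Dv' 1)))
      + sqrt (2 * a^2 * (sq2 a (Du 0) + sq2 a (Dv 1))) * sqrt (sq2 a \<theta>')"
proof -
  obtain h' where hm': "h' \<in> borel_measurable lborel" and h0': "\<forall>p. h' p \<ge> 0"
    and hae': "AE p in lborel. p \<in> cell a \<longrightarrow> cmod (wfun Du' Dv' p) \<le> h' p"
    and hint': "(\<integral>\<^sup>+p. ennreal ((h' p)^2) * indicator (cell a) p \<partial>lborel) \<le> ennreal (2 * a^2 * (sq2 a (Du' 0) + sq2 a (Dv' 1)))"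
    using wbound[of a Du' Dv', OF a L0' L1'] by blast
  obtain h where hm: "h \<in> borel_measurable lborel" and h0: "\<forall>p. h p \<ge> 0"
    and hae: "AE p in lborel. p \<in> cell a \<longrightarrow> cmod (wfun Du Dv p) \<le> h p"
    and hint: "(\<integral>\<^sup>+p. ennreal ((h p)^2) * indicator (cell a) p \<partial>lborel) \<le> ennreal (2 * a^2 * (sq2 a (Du 0) + sq2 a (Dv 1)))"
    using wbound[of a Du Dv, OF a L0 L1] by blast
  have W0: "2 * a^2 * (sq2 a (Du 0) + sq2 a (Dv 1)) \<ge> 0" "2 * a^2 * (sq2 a (Du' 0) + sq2 a (Dv' 1)) \<ge> 0"
    using sq2_nonneg by (auto intro!: mult_nonneg_nonneg add_nonneg_nonneg)
  have tm: "(\<lambda>p. cmod (\<theta> p)) \<in> borel_measurable lborel" using L2_meas[OF Lt] by measurable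
  have tm': "(\<lambda>p. cmod (\<theta>' p)) \<in> borel_measurable lborel" using L2_meas[OF Lt'] by measurable
  have I1: "cmod (LINT p:cell a|lborel. \<theta> p * cnj (wfun Du' Dv' p)) \<le> sqrt (sq2 a \<theta>) * sqrt (2 * a^2 * (sq2 a (Du' 0) + sq2 a (Dv' 1)))"
  proof (rule cs_set[where f="\<lambda>p. cmod (\<theta> p)" and g=h'])
    show "AE x in lborel. x \<in> cell a \<longrightarrow> cmod (\<theta> x * cnj (wfun Du' Dv' x)) \<le> cmod (\<theta> x) * h' x"
      using hae'
    proof eventually_elim
      case (elim x) thus ?case by (simp add: norm_mult mult_left_mono)
    qed
    show "(\<integral>\<^sup>+x. ennreal ((cmod (\<theta> x))^2) * indicator (cell a) x \<partial>lborel) \<le> ennreal (sq2 a \<theta>)"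
      using Qn_sq2[OF Lt] unfolding Qn_def by simp
    show "cell a \<in> sets lborel" by (rule cell_sets)
    show "(\<lambda>p. cmod (\<theta> p)) \<in> borel_measurable lborel" by (rule tm)
    show "h' \<in> borel_measurable lborel" by (rule hm')
    show "\<And>x. 0 \<le> cmod (\<theta> x)" by simp
    show "\<And>x. 0 \<le> h' x" using h0' by blast
    show "(\<integral>\<^sup>+x. ennreal ((h' x)^2) * indicator (cell a) x \<partial>lborel) \<le> ennreal (2 * a^2 * (sq2 a (Du' 0) + sq2 a (Dv' 1)))"
      by (rule hint')
    show "0 \<le> sq2 a \<theta>" by (rule sq2_nonneg)
    show "0 \<le> 2 * a^2 * (sq2 a (Du' 0) + sq2 a (Dv' 1))" by (rule W0(2))
  qed
  have I2: "cmod (LINT p:cell a|lborel. wfun Du Dv p * cnj (\<theta>' p)) \<le> sqrt (2 * a^2 * (sq2 a (Du 0) + sq2 a (Dv 1))) * sqrt (sq2 a \<theta>')"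
  proof (rule cs_set[where f=h and g="\<lambda>p. cmod (\<theta>' p)"])
    show "AE x in lborel. x \<in> cell a \<longrightarrow> cmod (wfun Du Dv x * cnj (\<theta>' x)) \<le> h x * cmod (\<theta>' x)"
      using hae
    proof eventually_elim
      case (elim x) thus ?case by (simp add: norm_mult mult_right_mono)
    qed
    show "(\<integral>\<^sup>+x. ennreal ((cmod (\<theta>' x))^2) * indicator (cell a) x \<partial>lborel) \<le> ennreal (sq2 a \<theta>')"
      using Qn_sq2[OF Lt'] unfolding Qn_def by simp
    show "cell a \<in> sets lborel" by (rule cell_sets)
    show "(\<lambda>p. cmod (\<theta>' p)) \<in> borel_measurable lborel" by (rule tm')
    show "h \<in> borel_measurable lborel" by (rule hm)
    show "\<And>x. 0 \<le> cmod (\<theta>' x)" by simp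
    show "\<And>x. 0 \<le> h x" using h0 by blast
    show "(\<integral>\<^sup>+x. ennreal ((h x)^2) * indicator (cell a) x \<partial>lborel) \<le> ennreal (2 * a^2 * (sq2 a (Du 0) + sq2 a (Dv 1)))"
      by (rule hint)
    show "0 \<le> sq2 a \<theta>'" by (rule sq2_nonneg)
    show "0 \<le> 2 * a^2 * (sq2 a (Du 0) + sq2 a (Dv 1))" by (rule W0(1))
  qed
  have "cmod (Bform a \<theta> Du Dv \<theta>' Du' Dv') \<le> cmod (LINT p:cell a|lborel. \<theta> p * cnj (wfun Du' Dv' p)) + cmod (LINT p:cell a|lborel. wfun Du Dv p * cnj (\<theta>' p))"
    unfolding Bform_def using norm_triangle_ineq[of "- (LINT p:cell a|lborel. \<theta> p * cnj (wfun Du' Dv' p))" "LINT p:cell a|lborel. wfun Du Dv p * cnj (\<theta>' p)"] by simp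
  thus ?thesis using I1 I2 by linarith
qed

lemma C_bound:
  assumes "L2 a u" "L2 a v" "L2 a u'" "L2 a v'"
  shows "cmod (Cform a u v u' v') \<le> sqrt (sq2 a v) * sqrt (sq2 a u') + sqrt (sq2 a u) * sqrt (sq2 a v')"
proof -
  have "cmod (Cform a u v u' v') \<le> cmod (LINT p:cell a|lborel. v p * cnj (u' p)) + cmod (LINT p:cell a|lborel. u p * cnj (v' p))"
    unfolding Cform_def using norm_triangle_ineq[of "- (LINT p:cell a|lborel. v p * cnj (u' p))" "LINT p:cell a|lborel. u p * cnj (v' p)"] by simp
  thus ?thesis using cs_L2[OF assms(2,3)] cs_L2[OF assms(1,4)] by linarith
qed


lemma cs2: fixes x1 x2 y1 y2 :: real
  shows "x1 * y1 + x2 * y2 \<le> sqrt (x1^2 + x2^2) * sqrt (y1^2 + y2^2)"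
  using cs3[of x1 y1 x2 y2 0 0] by simp

lemma sqrt_le_N: "0 \<le> N \<Longrightarrow> x \<le> N^2 \<Longrightarrow> sqrt x \<le> N"
  using real_sqrt_le_mono[of x "N^2"] by simp

lemma alg_B:
  fixes a \<beta> \<gamma> N N' bB t t' S S' C C' :: real
  assumes a: "a > 0" and bg: "\<beta> > 0" "\<gamma> > 0"
    and bB: "bB \<le> sqrt t * sqrt (2 * a^2 * S') + sqrt (2 * a^2 * S) * sqrt t'"
    and t: "0 \<le> t" "t \<le> a^2/8 * C" and t': "0 \<le> t'" "t' \<le> a^2/8 * C'"
    and nn: "S \<ge> 0" "S' \<ge> 0" "C \<ge> 0" "C' \<ge> 0" "N \<ge> 0" "N' \<ge> 0"
    and NS: "S + \<beta>/\<gamma> * C \<le> N^2" "S' + \<beta>/\<gamma> * C' \<le> N'^2"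
  shows "\<beta> * bB \<le> (a^2/2 * sqrt (\<beta> * \<gamma>)) * (N * N')"
proof -
  define k where "k = \<beta>/\<gamma>"
  have k0: "k > 0" using bg by (simp add: k_def)
  have s1: "sqrt t \<le> sqrt (a^2/8) * sqrt C" using t by (simp add: real_sqrt_mult[symmetric])
  have s1': "sqrt t' \<le> sqrt (a^2/8) * sqrt C'" using t' by (simp add: real_sqrt_mult[symmetric])
  have q: "sqrt (a^2/8) * sqrt (2 * a^2) = a^2/2"
  proof -
    have "sqrt (a^2/8) * sqrt (2 * a^2) = sqrt ((a^2/2)^2)" by (simp add: real_sqrt_mult[symmetric] power2_eq_square)
    thus ?thesis using a by simp
  qed
  have e1: "sqrt (2 * a^2 * S') = sqrt (2 * a^2) * sqrt S'" by (rule real_sqrt_mult)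
  have e2: "sqrt (2 * a^2 * S) = sqrt (2 * a^2) * sqrt S" by (rule real_sqrt_mult)
  have p1: "sqrt t * sqrt (2 * a^2 * S') \<le> sqrt (a^2/8) * sqrt C * sqrt (2 * a^2 * S')"
    by (rule mult_right_mono[OF s1]) (simp add: nn)
  have p2: "sqrt (2 * a^2 * S) * sqrt t' \<le> sqrt (2 * a^2 * S) * (sqrt (a^2/8) * sqrt C')"
    by (rule mult_left_mono[OF s1']) (simp add: nn)
  have r1: "sqrt (a^2/8) * sqrt C * sqrt (2 * a^2 * S') = (sqrt (a^2/8) * sqrt (2 * a^2)) * (sqrt C * sqrt S')"
    unfolding e1 by (simp only: ac_simps)
  have r2: "sqrt (2 * a^2 * S) * (sqrt (a^2/8) * sqrt C') = (sqrt (a^2/8) * sqrt (2 * a^2)) * (sqrt S * sqrt C')"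
    unfolding e2 by (simp only: ac_simps)
  have "bB \<le> a^2/2 * (sqrt C * sqrt S') + a^2/2 * (sqrt S * sqrt C')"
    using bB p1 p2 unfolding r1 r2 q by linarith
  also have "\<dots> = a^2/2 * (sqrt C * sqrt S' + sqrt S * sqrt C')" by (simp add: distrib_left)
  finally have b1: "bB \<le> a^2/2 * (sqrt C * sqrt S' + sqrt S * sqrt C')" .
  have bk: "\<beta> * sqrt C = sqrt (\<beta> * \<gamma>) * sqrt (k * C)" for C
  proof -
    have "sqrt (\<beta> * \<gamma>) * sqrt k = \<beta>"
      using bg by (simp add: k_def real_sqrt_mult[symmetric])
    thus ?thesis by (simp add: real_sqrt_mult mult.assoc[symmetric])
  qed
  have "\<beta> * (sqrt C * sqrt S' + sqrt S * sqrt C') = (\<beta> * sqrt C) * sqrt S' + sqrt S * (\<beta> * sqrt C')"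
    by (simp add: algebra_simps)
  also have "\<dots> = sqrt (\<beta> * \<gamma>) * (sqrt (k * C) * sqrt S' + sqrt S * sqrt (k * C'))"
    unfolding bk[of C] bk[of C'] by (simp add: algebra_simps)
  also have "\<dots> \<le> sqrt (\<beta> * \<gamma>) * (sqrt ((sqrt (k * C))^2 + (sqrt S)^2) * sqrt ((sqrt S')^2 + (sqrt (k * C'))^2))"
    by (intro mult_left_mono cs2) (use bg in auto)
  also have "\<dots> \<le> sqrt (\<beta> * \<gamma>) * (N * N')"
  proof (intro mult_left_mono mult_mono)
    have e: "(sqrt (k * C))^2 = k * C" "(sqrt S)^2 = S" "(sqrt (k * C'))^2 = k * C'" "(sqrt S')^2 = S'"
      using nn k0 by simp_all
    show "sqrt ((sqrt (k * C))^2 + (sqrt S)^2) \<le> N"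
      unfolding e using nn NS by (intro sqrt_le_N) (auto simp: k_def)
    show "sqrt ((sqrt S')^2 + (sqrt (k * C'))^2) \<le> N'"
      unfolding e using nn NS by (intro sqrt_le_N) (auto simp: k_def)
  qed (use nn bg in auto)
  finally have b2: "\<beta> * (sqrt C * sqrt S' + sqrt S * sqrt C') \<le> sqrt (\<beta> * \<gamma>) * (N * N')" .
  have "\<beta> * bB \<le> \<beta> * (a^2/2 * (sqrt C * sqrt S' + sqrt S * sqrt C'))"
    using b1 bg by (intro mult_left_mono) auto
  also have "\<dots> = a^2/2 * (\<beta> * (sqrt C * sqrt S' + sqrt S * sqrt C'))" by simp
  also have "\<dots> \<le> a^2/2 * (sqrt (\<beta> * \<gamma>) * (N * N'))" using b2 by (intro mult_left_mono) auto
  finally show ?thesis by simp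
qed

lemma alg_C:
  fixes a N N' bC tu tv tu' tv' A B A' B' :: real
  assumes bC: "bC \<le> sqrt tv * sqrt tu' + sqrt tu * sqrt tv'"
    and t: "0 \<le> tu" "tu \<le> a^2/8 * A" "0 \<le> tv" "tv \<le> a^2/8 * B"
      "0 \<le> tu'" "tu' \<le> a^2/8 * A'" "0 \<le> tv'" "tv' \<le> a^2/8 * B'"
    and nn: "A \<ge> 0" "B \<ge> 0" "A' \<ge> 0" "B' \<ge> 0" "N \<ge> 0" "N' \<ge> 0"
    and NS: "A + B \<le> N^2" "A' + B' \<le> N'^2"
  shows "bC \<le> a^2/8 * (N * N')"
proof -
  have sm: "sqrt x * sqrt y \<le> a^2/8 * (sqrt X * sqrt Y)" if "0 \<le> x" "x \<le> a^2/8 * X" "0 \<le> y" "y \<le> a^2/8 * Y" for x y X Y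
  proof -
    have "sqrt x * sqrt y \<le> sqrt (a^2/8 * X) * sqrt (a^2/8 * Y)"
      using that by (intro mult_mono real_sqrt_le_mono) auto
    also have "\<dots> = sqrt ((a^2/8)^2) * (sqrt X * sqrt Y)"
      using that by (simp add: real_sqrt_mult[symmetric] power2_eq_square algebra_simps)
    finally show ?thesis by simp
  qed
  have "bC \<le> a^2/8 * (sqrt B * sqrt A') + a^2/8 * (sqrt A * sqrt B')"
    using bC sm[of tv B tu' A'] sm[of tu A tv' B'] t by linarith
  also have "\<dots> = a^2/8 * (sqrt B * sqrt A' + sqrt A * sqrt B')" by (simp add: algebra_simps)
  also have "\<dots> \<le> a^2/8 * (sqrt ((sqrt B)^2 + (sqrt A)^2) * sqrt ((sqrt A')^2 + (sqrt B')^2))"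
    by (intro mult_left_mono cs2) auto
  also have "\<dots> \<le> a^2/8 * (N * N')"
  proof (intro mult_left_mono mult_mono)
    show "sqrt ((sqrt B)^2 + (sqrt A)^2) \<le> N" using nn NS by (intro sqrt_le_N) auto
    show "sqrt ((sqrt A')^2 + (sqrt B')^2) \<le> N'" using nn NS by (intro sqrt_le_N) auto
  qed (use nn in auto)
  finally show ?thesis .
qed


theorem lemma2:
  fixes a \<nu> \<alpha> \<beta> \<gamma> :: real
    and u v \<theta> u' v' \<theta>' :: fld
    and Du Dv D\<theta> Du' Dv' D\<theta>' :: grd
  assumes "a > 0" "\<nu> > 0" "\<alpha> \<ge> 0" "\<beta> > 0" "\<gamma> > 0"
    and "inV1 a u v Du Dv" "inV2 a \<theta> D\<theta>"
    and "inV1 a u' v' Du' Dv'" "inV2 a \<theta>' D\<theta>'"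
  shows "cmod (Pform a \<nu> \<alpha> \<beta> \<gamma> u v \<theta> Du Dv D\<theta> u' v' \<theta>' Du' Dv' D\<theta>')
         \<le> (\<nu> + 2 * a^2 / pi * sqrt (\<beta> * \<gamma>) + 2 * \<alpha> * a^2 / pi^2)
           * normV a \<beta> \<gamma> Du Dv D\<theta> * normV a \<beta> \<gamma> Du' Dv' D\<theta>'"
proof -
  note a = assms(1) and nu = assms(2) and al = assms(3) and be = assms(4) and ga = assms(5)
  have V1: "L2 a u \<and> L2 a v \<and> (\<forall>i<3. L2 a (Du i) \<and> L2 a (Dv i))" using assms(6) unfolding inV1_def by blast
  have V1': "L2 a u' \<and> L2 a v' \<and> (\<forall>i<3. L2 a (Du' i) \<and> L2 a (Dv' i))" using assms(8) unfolding inV1_def by blast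
  have V2: "L2 a \<theta> \<and> (\<forall>i<3. L2 a (D\<theta> i))" using assms(7) unfolding inV2_def by blast
  have V2': "L2 a \<theta>' \<and> (\<forall>i<3. L2 a (D\<theta>' i))" using assms(9) unfolding inV2_def by blast
  have L: "L2 a (Du i) \<and> L2 a (Dv i) \<and> L2 a (D\<theta> i) \<and> L2 a (Du' i) \<and> L2 a (Dv' i) \<and> L2 a (D\<theta>' i)" if "i < 3" for i
    using V1 V1' V2 V2' that by blast
  have L0: "L2 a (Du 0)" "L2 a (Dv 1)" "L2 a (Du' 0)" "L2 a (Dv' 1)" "L2 a (Du 2)" "L2 a (Dv 2)" "L2 a (Du' 2)" "L2 a (Dv' 2)"
    "L2 a (D\<theta> 2)" "L2 a (D\<theta>' 2)"
    using L[of 0] L[of 1] L[of 2] by auto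
  define k where "k = \<beta>/\<gamma>"
  have k0: "k > 0" using be ga by (simp add: k_def)
  define P where "P i = sq2 a (Du i) + sq2 a (Dv i) + k * sq2 a (D\<theta> i)" for i
  define P' where "P' i = sq2 a (Du' i) + sq2 a (Dv' i) + k * sq2 a (D\<theta>' i)" for i
  define N where "N = normV a \<beta> \<gamma> Du Dv D\<theta>"
  define N' where "N' = normV a \<beta> \<gamma> Du' Dv' D\<theta>'"
  have P0: "P i \<ge> 0" "P' i \<ge> 0" for i using k0 sq2_nonneg by (auto simp: P_def P'_def intro!: add_nonneg_nonneg)
  have NP: "N = sqrt (P 0 + P 1 + P 2)" unfolding N_def
    using L by (subst normV_eq) (auto simp: sum3 P_def k_def)
  have NP': "N' = sqrt (P' 0 + P' 1 + P' 2)" unfolding N'_def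
    using L by (subst normV_eq) (auto simp: sum3 P'_def k_def)
  have s0: "0 \<le> P 0 + P 1 + P 2" "0 \<le> P' 0 + P' 1 + P' 2"
    using P0[of 0] P0[of 1] P0[of 2] by linarith+
  have N0: "N \<ge> 0" "N' \<ge> 0" unfolding NP NP' using s0 by auto
  have N2: "N^2 = P 0 + P 1 + P 2" "N'^2 = P' 0 + P' 1 + P' 2" unfolding NP NP' using s0 by simp_all
  have hI: "cmod (innerV a \<beta> \<gamma> Du Dv D\<theta> Du' Dv' D\<theta>') \<le> N * N'"
    unfolding N_def N'_def by (rule inner_bound) (use L be ga in auto)
  have hB: "\<beta> * cmod (Bform a \<theta> Du Dv \<theta>' Du' Dv') \<le> (a^2/2 * sqrt (\<beta> * \<gamma>)) * (N * N')"
  proof (rule alg_B[OF a be ga B_bound[of a \<theta> \<theta>' Du Dv Du' Dv', OF a conjunct1[OF V2] conjunct1[OF V2'] L0(1-4)]])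
    show "0 \<le> sq2 a \<theta>" "0 \<le> sq2 a \<theta>'" by (rule sq2_nonneg)+
    show "sq2 a \<theta> \<le> a^2/8 * sq2 a (D\<theta> 2)" by (rule PV2[OF a assms(7)])
    show "sq2 a \<theta>' \<le> a^2/8 * sq2 a (D\<theta>' 2)" by (rule PV2[OF a assms(9)])
    show "sq2 a (Du 0) + sq2 a (Dv 1) + \<beta>/\<gamma> * sq2 a (D\<theta> 2) \<le> N^2"
      unfolding N2 P_def k_def[symmetric] using sq2_nonneg[of a] k0
      by (smt (verit, best) mult_nonneg_nonneg)
    show "sq2 a (Du' 0) + sq2 a (Dv' 1) + \<beta>/\<gamma> * sq2 a (D\<theta>' 2) \<le> N'^2"
      unfolding N2 P'_def k_def[symmetric] using sq2_nonneg[of a] k0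
      by (smt (verit, best) mult_nonneg_nonneg)
  qed (use N0 sq2_nonneg in auto)
  have hC: "cmod (Cform a u v u' v') \<le> a^2/8 * (N * N')"
  proof (rule alg_C[OF C_bound[OF conjunct1[OF V1] conjunct1[OF conjunct2[OF V1]] conjunct1[OF V1'] conjunct1[OF conjunct2[OF V1']]]])
    show "sq2 a u \<le> a^2/8 * sq2 a (Du 2)" "sq2 a v \<le> a^2/8 * sq2 a (Dv 2)" using PV1[OF a assms(6)] by auto
    show "sq2 a u' \<le> a^2/8 * sq2 a (Du' 2)" "sq2 a v' \<le> a^2/8 * sq2 a (Dv' 2)" using PV1[OF a assms(8)] by auto
    show "sq2 a (Du 2) + sq2 a (Dv 2) \<le> N^2"
      unfolding N2 P_def using sq2_nonneg[of a] k0
      by (smt (verit, best) mult_nonneg_nonneg)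
    show "sq2 a (Du' 2) + sq2 a (Dv' 2) \<le> N'^2"
      unfolding N2 P'_def using sq2_nonneg[of a] k0
      by (smt (verit, best) mult_nonneg_nonneg)
  qed (use N0 sq2_nonneg in auto)
  have tri3: "cmod (Pform a \<nu> \<alpha> \<beta> \<gamma> u v \<theta> Du Dv D\<theta> u' v' \<theta>' Du' Dv' D\<theta>')
     \<le> \<nu> * cmod (innerV a \<beta> \<gamma> Du Dv D\<theta> Du' Dv' D\<theta>') + \<beta> * cmod (Bform a \<theta> Du Dv \<theta>' Du' Dv') + \<alpha> * cmod (Cform a u v u' v')"
  proof -
    let ?x = "of_real \<nu> * innerV a \<beta> \<gamma> Du Dv D\<theta> Du' Dv' D\<theta>'"
    let ?y = "of_real \<beta> * Bform a \<theta> Du Dv \<theta>' Du' Dv'"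
    let ?z = "of_real \<alpha> * Cform a u v u' v'"
    have "cmod (?x + ?y + ?z) \<le> cmod ?x + cmod ?y + cmod ?z"
      by (meson add_mono_thms_linordered_semiring(3) norm_triangle_ineq order_trans)
    also have "\<dots> = \<nu> * cmod (innerV a \<beta> \<gamma> Du Dv D\<theta> Du' Dv' D\<theta>') + \<beta> * cmod (Bform a \<theta> Du Dv \<theta>' Du' Dv') + \<alpha> * cmod (Cform a u v u' v')"
      using nu be al by (simp add: norm_mult)
    finally show ?thesis unfolding Pform_def .
  qed
  have NN: "N * N' \<ge> 0" using N0 by simp
  have pi4: "pi \<le> 4" using pi_less_4 by simp
  have c1: "a^2/2 \<le> 2 * a^2 / pi"
  proof -
    have "a^2/2 * pi \<le> a^2/2 * 4" using pi4 a by (intro mult_left_mono) auto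
    thus ?thesis using pi_gt_zero by (simp add: field_simps)
  qed
  have c2: "a^2/8 \<le> 2 * a^2 / pi^2"
  proof -
    have "pi^2 \<le> 4^2" using pi4 pi_gt_zero by (intro power_mono) auto
    hence "a^2/8 * pi^2 \<le> a^2/8 * 16" using a by (intro mult_left_mono) auto
    thus ?thesis using pi_gt_zero by (simp add: field_simps)
  qed
  have "\<nu> * cmod (innerV a \<beta> \<gamma> Du Dv D\<theta> Du' Dv' D\<theta>') \<le> \<nu> * (N * N')" using hI nu by (intro mult_left_mono) auto
  moreover have "(a^2/2 * sqrt (\<beta> * \<gamma>)) * (N * N') \<le> (2 * a^2 / pi * sqrt (\<beta> * \<gamma>)) * (N * N')"
    using c1 NN be ga by (intro mult_right_mono) auto
  moreover have "\<alpha> * cmod (Cform a u v u' v') \<le> \<alpha> * (a^2/8 * (N * N'))" using hC al by (intro mult_left_mono) auto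
  moreover have "\<alpha> * (a^2/8 * (N * N')) \<le> (2 * \<alpha> * a^2 / pi^2) * (N * N')"
  proof -
    have "\<alpha> * (a^2/8) \<le> \<alpha> * (2 * a^2 / pi^2)" using c2 al by (intro mult_left_mono) auto
    hence "\<alpha> * (a^2/8) * (N * N') \<le> \<alpha> * (2 * a^2 / pi^2) * (N * N')" using NN by (intro mult_right_mono) auto
    thus ?thesis by (simp add: mult_ac)
  qed
  ultimately have "cmod (Pform a \<nu> \<alpha> \<beta> \<gamma> u v \<theta> Du Dv D\<theta> u' v' \<theta>' Du' Dv' D\<theta>')
    \<le> \<nu> * (N * N') + (2 * a^2 / pi * sqrt (\<beta> * \<gamma>)) * (N * N') + (2 * \<alpha> * a^2 / pi^2) * (N * N')"
    using tri3 hB by linarith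
  also have "\<dots> = (\<nu> + 2 * a^2 / pi * sqrt (\<beta> * \<gamma>) + 2 * \<alpha> * a^2 / pi^2) * N * N'"
    by (simp add: algebra_simps)
  finally show ?thesis unfolding N_def N'_def .
qed


end
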